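(* There is a constant $C$ such that for all $N\ge1$ and all $f\in L^2(\mathbb{R}\times\mathbb{T})$, $$\|e^{it\partial_x\partial_y}P_{\le N}f\|_{L^4_{t,x,y}([0,1]\times\mathbb{R}\times\mathbb{T})}\le C\Big((\log N)^{\frac14}\|f\|_{L^2(\mathbb{R}\times\mathbb{T})}+N^{\frac14}\|\widehat f(\xi,n)\|_{\ell^4_nL^2_\xi}\Big),$$ where $\|\widehat f(\xi,n)\|_{\ell^4_nL^2_\xi}=\big(\sum_{n\in\mathbb{Z}}\big(\int_{\mathbb{R}}|\widehat f(\xi,n)|^2d\xi\big)^{2}\big)^{1/4}$.
   Context: $\mathbb{T}=\mathbb{R}/\mathbb{Z}$. Fourier transform $\widehat f(\xi,n)=\int_{\mathbb{R}\times\mathbb{T}}e^{-2\pi i(\xi x+ny)}f(x,y)\,dx\,dy$, $(\xi,n)\in\mathbb{R}\times\mathbb{Z}$. $e^{it\partial_x\partial_y}$ is the propagator of $i\partial_tu+\partial_x\partial_yu=0$, i.e. the Fourier multiplier $e^{-4\pi^2 it\xi n}$. $\varphi$ is a fixed smooth radial function on $\mathbb{R}$ equal to $1$ on $|x|\le1$ and $0$ on $|x|\ge2$, and $P_{\le N}$ is the Fourier multiplier $\varphi(\xi/N)\varphi(n/N)$. *)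

theory Defs
  imports "HOL-Analysis.Analysis"
begin

(* Functions on R x T are represented as functions on R x R that are 1-periodic in the
   second variable; T = R/Z is identified with the fundamental domain [0,1). *)

definition smooth_fun :: "(real \<Rightarrow> real) \<Rightarrow> bool" where
  "smooth_fun \<phi> \<longleftrightarrow> (\<forall>k x. ((deriv ^^ k) \<phi>) differentiable (at x))"

definition in_L2_RT :: "(real \<times> real \<Rightarrow> complex) \<Rightarrow> bool" where
  "in_L2_RT f \<longleftrightarrow> f \<in> borel_measurable lebesgue \<and> (\<forall>x y. f (x, y + 1) = f (x, y)) \<and>
     (\<integral>\<^sup>+ z. indicator (UNIV \<times> {0..<1}) z * ennreal ((cmod (f z))\<^sup>2) \<partial>lebesgue) < \<infinity>"

definition L2_norm_RT :: "(real \<times> real \<Rightarrow> complex) \<Rightarrow> real" where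
  "L2_norm_RT f = sqrt (enn2real
     (\<integral>\<^sup>+ z. indicator (UNIV \<times> {0..<1}) z * ennreal ((cmod (f z))\<^sup>2) \<partial>lebesgue))"

(* Fourier transform of the truncation f * 1_{|x| <= R}, which lies in L^1(R x T). *)
definition fourier_trunc :: "(real \<times> real \<Rightarrow> complex) \<Rightarrow> real \<Rightarrow> real \<Rightarrow> int \<Rightarrow> complex" where
  "fourier_trunc f R \<xi> n =
     (LINT z : ({-R..R} \<times> {0..<1}) | lebesgue.
        exp (- (2 * pi * \<i>) * complex_of_real (\<xi> * fst z + real_of_int n * snd z)) * f z)"

(* g is (a representative of) the L^2 Fourier transform \<hat>f on R x Z, i.e. the L^2(R x Z)
   limit of the Fourier transforms of the truncations (Plancherel). *)
definition is_L2_fourier :: "(real \<times> real \<Rightarrow> complex) \<Rightarrow> (real \<Rightarrow> int \<Rightarrow> complex) \<Rightarrow> bool" where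
  "is_L2_fourier f g \<longleftrightarrow>
     (\<forall>n. (\<lambda>\<xi>. g \<xi> n) \<in> borel_measurable lebesgue) \<and>
     (\<integral>\<^sup>+ n. (\<integral>\<^sup>+ \<xi>. ennreal ((cmod (g \<xi> n))\<^sup>2) \<partial>lebesgue) \<partial>count_space UNIV) < \<infinity> \<and>
     ((\<lambda>R. \<integral>\<^sup>+ n. (\<integral>\<^sup>+ \<xi>. ennreal ((cmod (g \<xi> n - fourier_trunc f R \<xi> n))\<^sup>2) \<partial>lebesgue)
                \<partial>count_space UNIV) \<longlongrightarrow> 0) at_top"

definition l4L2_norm :: "(real \<Rightarrow> int \<Rightarrow> complex) \<Rightarrow> real" where
  "l4L2_norm g = (enn2real (\<integral>\<^sup>+ n. (\<integral>\<^sup>+ \<xi>. ennreal ((cmod (g \<xi> n))\<^sup>2) \<partial>lebesgue)\<^sup>2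
                      \<partial>count_space UNIV)) powr (1/4)"

(* (e^{it\<partial>_x\<partial>_y} P_{\<le>N} f)(t,x,y), written as the inverse Fourier transform of
   e^{-4\<pi>^2 i t \<xi> n} \<phi>(\<xi>/N) \<phi>(n/N) \<hat>f(\<xi>,n); the sum is over |n| \<le> 2N since \<phi>(n/N) = 0 otherwise. *)
definition schrod_PN :: "(real \<Rightarrow> real) \<Rightarrow> real \<Rightarrow> (real \<Rightarrow> int \<Rightarrow> complex) \<Rightarrow>
    real \<Rightarrow> real \<Rightarrow> real \<Rightarrow> complex" where
  "schrod_PN \<phi> N g t x y =
     (\<Sum>n\<in>{n::int. \<bar>real_of_int n\<bar> \<le> 2 * N}.
        (LINT \<xi> | lebesgue.
           exp ((2 * pi * \<i>) * complex_of_real (\<xi> * x + real_of_int n * y)) *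
           exp (- (4 * pi\<^sup>2 * \<i>) * complex_of_real (t * \<xi> * real_of_int n)) *
           complex_of_real (\<phi> (\<xi> / N) * \<phi> (real_of_int n / N)) * g \<xi> n))"

definition L4_pow4_TRT :: "(real \<Rightarrow> real \<Rightarrow> real \<Rightarrow> complex) \<Rightarrow> ennreal" where
  "L4_pow4_TRT u = (\<integral>\<^sup>+ w. indicator ({0..1} \<times> UNIV \<times> {0..<1}) w *
       ennreal ((cmod (u (fst w) (fst (snd w)) (snd (snd w)))) ^ 4) \<partial>lebesgue)"

end

theory Submission
  imports Defs
begin

lemma cmod_sq_cnj: "(complex_of_real (cmod z))\<^sup>2 = z * cnj z"
  using complex_norm_square[of z] by simp

lemma bessel:
  fixes G :: "'a \<Rightarrow> complex" and E :: "'i \<Rightarrow> 'a \<Rightarrow> complex"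
  assumes I: "finite I" and V: "V > 0"
    and iG: "integrable M (\<lambda>x. G x * cnj (G x))"
    and iGE: "\<And>k. k \<in> I \<Longrightarrow> integrable M (\<lambda>x. G x * cnj (E k x))"
    and iEE: "\<And>j k. j \<in> I \<Longrightarrow> k \<in> I \<Longrightarrow> integrable M (\<lambda>x. E j x * cnj (E k x))"
    and orth: "\<And>j k. j \<in> I \<Longrightarrow> k \<in> I \<Longrightarrow>
        (LINT x|M. E j x * cnj (E k x)) = (if j = k then complex_of_real V else 0)"
  shows "(\<Sum>k\<in>I. (cmod (LINT x|M. G x * cnj (E k x)))\<^sup>2) \<le> V * (LINT x|M. (cmod (G x))\<^sup>2)"
proof -
  define c where "c k = (LINT x|M. G x * cnj (E k x))" for k
  define H where "H x = G x - (\<Sum>k\<in>I. c k * E k x) / V" for x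
  define S where "S = (\<Sum>k\<in>I. (cmod (c k))\<^sup>2)"
  have iEG: "integrable M (\<lambda>x. E k x * cnj (G x))" if "k \<in> I" for k
  proof -
    have "integrable M (\<lambda>x. cnj (G x * cnj (E k x)))" using iGE[OF that] by (rule integrable_cnj)
    then show ?thesis by (simp add: mult.commute)
  qed
  have int_EG: "(LINT x|M. E k x * cnj (G x)) = cnj (c k)" if "k \<in> I" for k
  proof -
    have "(LINT x|M. E k x * cnj (G x)) = (LINT x|M. cnj (G x * cnj (E k x)))" by (simp add: mult.commute)
    also have "\<dots> = cnj (c k)" unfolding c_def using Bochner_Integration.integral_cnj[of M "\<lambda>x. G x * cnj (E k x)"] by simp
    finally show ?thesis .
  qed
  have eq: "H x * cnj (H x) = G x * cnj (G x)
      - (\<Sum>k\<in>I. (cnj (c k) / V) * (G x * cnj (E k x)))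
      - (\<Sum>k\<in>I. (c k / V) * (E k x * cnj (G x)))
      + (\<Sum>j\<in>I. \<Sum>k\<in>I. (c j * cnj (c k) / V\<^sup>2) * (E j x * cnj (E k x)))" for x
    unfolding H_def
    apply (simp add: algebra_simps sum_distrib_left sum_distrib_right sum_subtractf power2_eq_square
        sum_divide_distrib[symmetric] field_simps)
    by (rule disjI2) (rule sum.swap)
  have i1: "integrable M (\<lambda>x. \<Sum>k\<in>I. (cnj (c k) / V) * (G x * cnj (E k x)))"
    using iGE by (intro Bochner_Integration.integrable_sum Bochner_Integration.integrable_mult_right) auto
  have i2: "integrable M (\<lambda>x. \<Sum>k\<in>I. (c k / V) * (E k x * cnj (G x)))"
    using iEG by (intro Bochner_Integration.integrable_sum Bochner_Integration.integrable_mult_right) auto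
  have i3: "integrable M (\<lambda>x. \<Sum>j\<in>I. \<Sum>k\<in>I. (c j * cnj (c k) / V\<^sup>2) * (E j x * cnj (E k x)))"
    using iEE by (intro Bochner_Integration.integrable_sum Bochner_Integration.integrable_mult_right) auto
  have v1: "(LINT x|M. (\<Sum>k\<in>I. (cnj (c k) / V) * (G x * cnj (E k x)))) = S / V"
    using iGE by (simp add: integral_sum S_def sum_divide_distrib cmod_sq_cnj c_def mult.commute)
  have v2: "(LINT x|M. (\<Sum>k\<in>I. (c k / V) * (E k x * cnj (G x)))) = S / V"
    using iEG int_EG by (simp add: integral_sum S_def sum_divide_distrib cmod_sq_cnj)
  have v3: "(LINT x|M. (\<Sum>j\<in>I. \<Sum>k\<in>I. (c j * cnj (c k) / V\<^sup>2) * (E j x * cnj (E k x)))) = S / V"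
  proof -
    have "(LINT x|M. (\<Sum>j\<in>I. \<Sum>k\<in>I. (c j * cnj (c k) / V\<^sup>2) * (E j x * cnj (E k x))))
        = (\<Sum>j\<in>I. \<Sum>k\<in>I. (c j * cnj (c k) / V\<^sup>2) * (if j = k then complex_of_real V else 0))"
      using iEE orth I by (simp add: integral_sum integrable_sum)
    also have "\<dots> = (\<Sum>j\<in>I. c j * cnj (c j) / V)"
      using I V by (simp add: if_distrib sum.delta power2_eq_square cong: if_cong)
    also have "\<dots> = S / V" by (simp add: S_def sum_divide_distrib cmod_sq_cnj)
    finally show ?thesis .
  qed
  have iH: "integrable M (\<lambda>x. H x * cnj (H x))"
    unfolding eq using iG i1 i2 i3 by auto
  have "(LINT x|M. H x * cnj (H x)) = (LINT x|M. G x * cnj (G x)) - S / V"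
    unfolding eq using iG i1 i2 i3 v1 v2 v3 by simp
  moreover have "(LINT x|M. G x * cnj (G x)) = complex_of_real (LINT x|M. (cmod (G x))\<^sup>2)"
    using integral_complex_of_real[of M "\<lambda>x. (cmod (G x))\<^sup>2"] by (simp add: cmod_sq_cnj)
  moreover have "0 \<le> Re (LINT x|M. H x * cnj (H x))"
  proof -
    have "Re (LINT x|M. H x * cnj (H x)) = (LINT x|M. Re (H x * cnj (H x)))"
      using iH by (rule integral_Re[symmetric])
    also have "\<dots> \<ge> 0" by (intro Bochner_Integration.integral_nonneg) simp
    finally show ?thesis by simp
  qed
  ultimately have "S / V \<le> (LINT x|M. (cmod (G x))\<^sup>2)" by simp
  then show ?thesis using V by (simp add: S_def c_def field_simps)
qed


definition ce :: "real \<Rightarrow> complex" where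
  "ce s = exp ((2 * pi * \<i>) * complex_of_real s)"

lemma ce_add: "ce (a + b) = ce a * ce b"
  by (simp add: ce_def distrib_left exp_add)

lemma norm_ce[simp]: "cmod (ce s) = 1"
  unfolding ce_def by (simp add: norm_exp_eq_Re)

lemma cnj_ce: "cnj (ce s) = ce (- s)"
  unfolding ce_def exp_cnj by simp

lemma ce_int: "ce (of_int k) = 1"
proof -
  have "exp ((2 * pi * \<i>) * complex_of_real (of_int k)) = exp (complex_of_real (2 * of_int k * pi) * \<i>)"
    by (simp add: algebra_simps)
  also have "\<dots> = 1" by (rule exp_integer_2pi) simp
  finally show ?thesis by (simp add: ce_def)
qed

lemma ce_zero[simp]: "ce 0 = 1" by (simp add: ce_def)

lemma continuous_ce[continuous_intros]:
  "continuous_on S f \<Longrightarrow> continuous_on S (\<lambda>x. ce (f x))"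
  unfolding ce_def by (intro continuous_intros)

lemma borel_ce[measurable]: "ce \<in> borel_measurable borel"
  by (intro borel_measurable_continuous_onI continuous_ce continuous_on_id)

lemma ce_deriv:
  "((\<lambda>x. ce (c * x)) has_vector_derivative ((2 * complex_of_real pi * \<i> * complex_of_real c) * ce (c * x))) (at x within S)"
proof -
  have e: "ce (c * t) = exp (t *\<^sub>R (2 * complex_of_real pi * \<i> * complex_of_real c))" for t
    by (simp add: ce_def scaleR_conv_of_real algebra_simps)
  have f: "(\<lambda>x. ce (c * x)) = (\<lambda>t. exp (t *\<^sub>R (2 * complex_of_real pi * \<i> * complex_of_real c)))"
    by (rule ext) (rule e)
  show ?thesis unfolding f e
    using exp_scaleR_has_vector_derivative_right[where t=x and A="2 * complex_of_real pi * \<i> * complex_of_real c" and T=S]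
    by (metis mult.commute)
qed

lemma orth1:
  assumes L: "L > 0"
  shows "(LINT x|lborel. indicator {a..a+L} x *\<^sub>R ce (of_int j * x / L)) = (if j = 0 then complex_of_real L else 0)"
proof (cases "j = 0")
  case True
  then show ?thesis using L by (simp add: scaleR_conv_of_real)
next
  case False
  define c where "c = of_int j / L"
  have c0: "c \<noteq> 0" using False L by (simp add: c_def)
  have eq: "ce (of_int j * x / L) = ce (c * x)" for x by (simp add: c_def)
  have "(LINT x|lborel. indicator {a..a+L} x *\<^sub>R ce (c * x)) =
      inverse (2 * complex_of_real pi * \<i> * complex_of_real c) * ce (c * (a + L)) - inverse (2 * complex_of_real pi * \<i> * complex_of_real c) * ce (c * a)"
  proof (rule integral_FTC_atLeastAtMost)
    show "a \<le> a + L" using L by simp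
    fix x
    show "((\<lambda>x. inverse (2 * complex_of_real pi * \<i> * complex_of_real c) * ce (c * x)) has_vector_derivative ce (c * x)) (at x within {a..a + L})"
      using has_vector_derivative_mult_right[OF ce_deriv[of c x "{a..a+L}"], of "inverse (2 * complex_of_real pi * \<i> * complex_of_real c)"]
      using c0 by (simp add: field_simps)
  next
    show "continuous_on {a..a + L} (\<lambda>x. ce (c * x))" by (intro continuous_intros)
  qed
  also have "ce (c * (a + L)) = ce (c * a)"
  proof -
    have "c * (a + L) = c * a + of_int j" using L by (simp add: c_def field_simps)
    then show ?thesis by (simp add: ce_add ce_int)
  qed
  finally show ?thesis using False eq by simp
qed


lemma cover_indicator:
  fixes L :: real and M :: nat
  assumes L: "L > 0"
  shows "indicator {- real M / L .. real M / L} x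
      \<le> (\<Sum>k\<in>{- int M..int M}. (indicator {of_int k / L .. (of_int k + 1) / L} x :: ennreal))"
proof (cases "x \<in> {- real M / L .. real M / L}")
  case True
  define k where "k = \<lfloor>L * x\<rfloor>"
  have lx: "- real M \<le> L * x" "L * x \<le> real M" using True L by (auto simp: field_simps)
  have "- int M \<le> k" "k \<le> int M" using lx unfolding k_def by (simp_all add: le_floor_iff floor_le_iff)
  then have kin: "k \<in> {- int M..int M}" by auto
  have "of_int k \<le> L * x" "L * x \<le> of_int k + 1"
    unfolding k_def using of_int_floor_le[of "L*x"] real_of_int_floor_add_one_ge[of "L*x"] by auto
  then have "x \<in> {of_int k / L .. (of_int k + 1) / L}" using L by (auto simp: field_simps)
  then have "(1::ennreal) \<le> indicator {of_int k / L .. (of_int k + 1) / L} x" by simp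
  also have "\<dots> \<le> (\<Sum>k\<in>{- int M..int M}. (indicator {of_int k / L .. (of_int k + 1) / L} x :: ennreal))"
    by (rule member_le_sum[OF kin]) auto
  finally show ?thesis by (simp add: indicator_def)
qed simp

lemma theta_lemma:
  fixes Q :: "real \<Rightarrow> ennreal" and L :: real and V :: ennreal
  assumes L: "L > 0" and Q[measurable]: "Q \<in> borel_measurable borel"
    and B: "\<And>\<theta> K. \<theta> \<in> {0..1/L} \<Longrightarrow> finite K \<Longrightarrow> (\<Sum>k\<in>K. Q (of_int k / L + \<theta>)) \<le> ennreal L * V"
  shows "(\<integral>\<^sup>+x. Q x \<partial>lborel) \<le> V"
proof -
  have step: "(\<integral>\<^sup>+x. Q x * indicator {- real M / L .. real M / L} x \<partial>lborel) \<le> V" for M :: nat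
  proof -
    have "(\<integral>\<^sup>+x. Q x * indicator {- real M / L .. real M / L} x \<partial>lborel)
        \<le> (\<integral>\<^sup>+x. (\<Sum>k\<in>{- int M..int M}. Q x * indicator {of_int k / L .. (of_int k + 1) / L} x) \<partial>lborel)"
      by (intro nn_integral_mono, subst sum_distrib_left[symmetric], rule mult_left_mono[OF cover_indicator[OF L]]) simp
    also have "\<dots> = (\<Sum>k\<in>{- int M..int M}. \<integral>\<^sup>+x. Q x * indicator {of_int k / L .. (of_int k + 1) / L} x \<partial>lborel)"
      by (intro nn_integral_sum) measurable
    also have "\<dots> = (\<Sum>k\<in>{- int M..int M}. \<integral>\<^sup>+\<theta>. Q (of_int k / L + \<theta>) * indicator {0 .. 1 / L} \<theta> \<partial>lborel)"
    proof (intro sum.cong refl)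
      fix k :: int
      have "(\<integral>\<^sup>+x. Q x * indicator {of_int k / L .. (of_int k + 1) / L} x \<partial>lborel)
          = ennreal \<bar>1::real\<bar> * (\<integral>\<^sup>+\<theta>. Q (of_int k / L + 1 * \<theta>) * indicator {of_int k / L .. (of_int k + 1) / L} (of_int k / L + 1 * \<theta>) \<partial>lborel)"
        by (rule nn_integral_real_affine) auto
      also have "\<dots> = (\<integral>\<^sup>+\<theta>. Q (of_int k / L + \<theta>) * indicator {0 .. 1 / L} \<theta> \<partial>lborel)"
        using L by (simp only: abs_one ennreal_1 mult_1 mult_1_left, intro nn_integral_cong) (auto simp: indicator_def field_simps zero_le_mult_iff)
      finally show "(\<integral>\<^sup>+x. Q x * indicator {of_int k / L .. (of_int k + 1) / L} x \<partial>lborel)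
          = (\<integral>\<^sup>+\<theta>. Q (of_int k / L + \<theta>) * indicator {0 .. 1 / L} \<theta> \<partial>lborel)" .
    qed
    also have "\<dots> = (\<integral>\<^sup>+\<theta>. (\<Sum>k\<in>{- int M..int M}. Q (of_int k / L + \<theta>)) * indicator {0 .. 1 / L} \<theta> \<partial>lborel)"
      by (subst nn_integral_sum[symmetric]) (measurable, simp add: sum_distrib_right)
    also have "\<dots> \<le> (\<integral>\<^sup>+\<theta>. (ennreal L * V) * indicator {0 .. 1 / L} \<theta> \<partial>lborel)"
      by (intro nn_integral_mono) (auto simp: indicator_def intro!: B)
    also have "\<dots> = ennreal L * V * ennreal (1 / L)"
      using L by (simp add: nn_integral_cmult_indicator)
    also have "\<dots> = V"
    proof -
      have "ennreal L * V * ennreal (1 / L) = (ennreal L * ennreal (1 / L)) * V" by (simp add: ac_simps)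
      also have "ennreal L * ennreal (1 / L) = 1" using L by (simp add: ennreal_mult[symmetric])
      finally show ?thesis by simp
    qed
    finally show ?thesis .
  qed
  have sup: "Q x = (SUP M. Q x * indicator {- real M / L .. real M / L} x)" for x
  proof (rule antisym)
    obtain M :: nat where "\<bar>L * x\<bar> \<le> real M" using real_arch_simple by blast
    then have "x \<in> {- real M / L .. real M / L}" using L by (auto simp: field_simps abs_le_iff)
    then show "Q x \<le> (SUP M. Q x * indicator {- real M / L .. real M / L} x)"
      by (intro SUP_upper2[of M]) auto
  qed (intro SUP_least, simp add: indicator_def)
  have "(\<integral>\<^sup>+x. Q x \<partial>lborel) = (\<integral>\<^sup>+x. (SUP M. Q x * indicator {- real M / L .. real M / L} x) \<partial>lborel)"
    by (subst sup) simp
  also have "\<dots> = (SUP M. \<integral>\<^sup>+x. Q x * indicator {- real M / L .. real M / L} x \<partial>lborel)"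
  proof (rule nn_integral_monotone_convergence_SUP)
    show "incseq (\<lambda>M x. Q x * indicator {- real M / L .. real M / L} x)"
      using L by (auto simp: incseq_def le_fun_def indicator_def field_simps intro!: mult_left_mono)
  qed measurable
  also have "\<dots> \<le> V" by (intro SUP_least step)
  finally show ?thesis .
qed


lemma sq_integrable:
  fixes G :: "'a \<Rightarrow> complex"
  assumes [measurable]: "G \<in> borel_measurable M" and fin: "(\<integral>\<^sup>+\<xi>. (cmod (G \<xi>))\<^sup>2 \<partial>M) < \<infinity>"
  shows "integrable M (\<lambda>\<xi>. (cmod (G \<xi>))\<^sup>2)"
  by (rule integrableI_bounded) (use fin in auto)

lemma L1_of_L2:
  fixes G :: "'a \<Rightarrow> complex"
  assumes [measurable]: "G \<in> borel_measurable M" and fin: "(\<integral>\<^sup>+\<xi>. (cmod (G \<xi>))\<^sup>2 \<partial>M) < \<infinity>"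
    and A[measurable]: "A \<in> sets M" and Afin: "emeasure M A < \<infinity>"
    and supp: "\<And>\<xi>. \<xi> \<notin> A \<Longrightarrow> G \<xi> = 0"
  shows "integrable M G"
proof (rule Bochner_Integration.integrable_bound)
  show "integrable M (\<lambda>\<xi>. (cmod (G \<xi>))\<^sup>2 + indicator A \<xi>)"
    using sq_integrable[OF assms(1,2)] Afin by (intro Bochner_Integration.integrable_add) auto
  show "AE x in M. norm (G x) \<le> norm ((cmod (G x))\<^sup>2 + indicat_real A x)"
  proof (rule AE_I2)
    fix x show "norm (G x) \<le> norm ((cmod (G x))\<^sup>2 + indicat_real A x)"
    proof (cases "x \<in> A")
      case True
      have "0 \<le> (cmod (G x) - 1)\<^sup>2" by simp
      then have "2 * cmod (G x) \<le> (cmod (G x))\<^sup>2 + 1" by (simp add: power2_diff)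
      then have "cmod (G x) \<le> (cmod (G x))\<^sup>2 + 1"
        using norm_ge_zero[of "G x"] by linarith
      then show ?thesis using True by simp
    next
      case False then show ?thesis using supp by simp
    qed
  qed
qed measurable

lemma plancherel_1d:
  fixes G :: "real \<Rightarrow> complex" and K :: real
  assumes K: "K > 0" and G[measurable]: "G \<in> borel_measurable borel"
    and supp: "\<And>\<xi>. \<xi> \<notin> {-K..K} \<Longrightarrow> G \<xi> = 0"
    and fin: "(\<integral>\<^sup>+\<xi>. (cmod (G \<xi>))\<^sup>2 \<partial>lborel) < \<infinity>"
  shows "(\<lambda>x. LINT \<xi>|lborel. ce (\<xi> * x) * G \<xi>) \<in> borel_measurable borel"
    and "\<And>x. (cmod (LINT \<xi>|lborel. ce (\<xi> * x) * G \<xi>))\<^sup>2 \<le> 2*K * (LINT \<xi>|lborel. (cmod (G \<xi>))\<^sup>2)"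
    and "(\<integral>\<^sup>+x. (cmod (LINT \<xi>|lborel. ce (\<xi> * x) * G \<xi>))\<^sup>2 \<partial>lborel) \<le> (\<integral>\<^sup>+\<xi>. (cmod (G \<xi>))\<^sup>2 \<partial>lborel)"
proof -
  define h where "h x = (LINT \<xi>|lborel. ce (\<xi> * x) * G \<xi>)" for x
  have Gm2[measurable]: "G \<in> borel_measurable lborel" by simp
  have iG2: "integrable lborel (\<lambda>\<xi>. (cmod (G \<xi>))\<^sup>2)" by (rule sq_integrable[OF Gm2 fin])
  have iG: "integrable lborel G"
    by (rule L1_of_L2[OF Gm2 fin, of "{-K..K}"]) (use supp K in auto)
  show hm: "h \<in> borel_measurable borel"
    unfolding h_def by measurable
  define E where "E x \<xi> = indicator {-K..K} \<xi> *\<^sub>R ce (- (\<xi> * x))" for x \<xi>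
  have GE: "G \<xi> * cnj (E x \<xi>) = ce (\<xi> * x) * G \<xi>" for x \<xi>
    using supp[of \<xi>] by (cases "\<xi> \<in> {-K..K}") (auto simp: E_def cnj_ce scaleR_conv_of_real)
  have hE: "h x = (LINT \<xi>|lborel. G \<xi> * cnj (E x \<xi>))" for x
    unfolding h_def GE ..
  have iGG: "integrable lborel (\<lambda>\<xi>. G \<xi> * cnj (G \<xi>))"
  proof -
    have "integrable lborel (\<lambda>\<xi>. complex_of_real ((cmod (G \<xi>))\<^sup>2))"
      using complex_of_real_integrable_eq[THEN iffD2, OF iG2] .
    then show ?thesis by (simp add: cmod_sq_cnj)
  qed
  have iGE: "integrable lborel (\<lambda>\<xi>. G \<xi> * cnj (E x \<xi>))" for x
  proof (rule Bochner_Integration.integrable_bound[OF iG])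
    show "AE \<xi> in lborel. norm (G \<xi> * cnj (E x \<xi>)) \<le> norm (G \<xi>)"
      by (auto simp: E_def norm_mult indicator_def)
  qed (simp add: E_def cnj_ce, measurable)
  have iEE: "integrable lborel (\<lambda>\<xi>. E x \<xi> * cnj (E y \<xi>))" for x y
  proof -
    have "integrable lborel (\<lambda>\<xi>. indicator {-K..K} \<xi> *\<^sub>R (ce (- (\<xi> * x)) * cnj (ce (- (\<xi> * y)))))"
      by (rule integrableI_bounded_set_indicator[where B=1]) (use K in \<open>auto simp: norm_mult cnj_ce\<close>)
    moreover have "E x \<xi> * cnj (E y \<xi>) = indicator {-K..K} \<xi> *\<^sub>R (ce (- (\<xi> * x)) * cnj (ce (- (\<xi> * y))))" for \<xi>
      by (auto simp: E_def indicator_def)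
    ultimately show ?thesis by (simp only:)
  qed
  have orthE: "(LINT \<xi>|lborel. E x \<xi> * cnj (E y \<xi>)) = (if x = y then complex_of_real (2*K) else 0)"
    if "x = of_int j / (2*K) + \<theta>" "y = of_int k / (2*K) + \<theta>" for x y j k \<theta>
  proof -
    have "E x \<xi> * cnj (E y \<xi>) = indicator {-K..-K + 2*K} \<xi> *\<^sub>R ce (of_int (k - j) * \<xi> / (2*K))" for \<xi>
    proof -
      have arg: "- (\<xi> * x) + \<xi> * y = of_int (k - j) * \<xi> / (2*K)"
        unfolding that using K by (simp add: field_simps)
      have "ce (- (\<xi> * x)) * ce (\<xi> * y) = ce (of_int (k - j) * \<xi> / (2*K))"
        by (simp only: ce_add[symmetric] arg)
      then show ?thesis by (simp add: E_def cnj_ce indicator_def)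
    qed
    then have "(LINT \<xi>|lborel. E x \<xi> * cnj (E y \<xi>)) = (if k - j = 0 then complex_of_real (2*K) else 0)"
      using orth1[of "2*K" "-K" "k - j"] K by simp
    moreover have "(k - j = 0) = (x = y)" unfolding that using K by (auto simp: field_simps)
    ultimately show ?thesis by simp
  qed
  show "(cmod (h x))\<^sup>2 \<le> 2*K * (LINT \<xi>|lborel. (cmod (G \<xi>))\<^sup>2)" for x
  proof -
    have "(\<Sum>k\<in>{x}. (cmod (LINT \<xi>|lborel. G \<xi> * cnj (E k \<xi>)))\<^sup>2) \<le> 2*K * (LINT \<xi>|lborel. (cmod (G \<xi>))\<^sup>2)"
      by (rule bessel[OF _ _ iGG iGE iEE]) (use K orthE[where x=x and y=x and j=0 and k=0 and \<theta>=x] in auto)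
    then show ?thesis by (simp add: hE)
  qed
  have intG: "(\<integral>\<^sup>+\<xi>. (cmod (G \<xi>))\<^sup>2 \<partial>lborel) = ennreal (LINT \<xi>|lborel. (cmod (G \<xi>))\<^sup>2)"
    using iG2 by (simp add: nn_integral_eq_integral)
  show "(\<integral>\<^sup>+x. (cmod (h x))\<^sup>2 \<partial>lborel) \<le> (\<integral>\<^sup>+\<xi>. (cmod (G \<xi>))\<^sup>2 \<partial>lborel)"
  proof (rule theta_lemma[of "2*K"])
    show "(\<lambda>x. ennreal ((cmod (h x))\<^sup>2)) \<in> borel_measurable borel" using hm by measurable
    fix \<theta> :: real and KK :: "int set" assume "\<theta> \<in> {0..1/(2*K)}" "finite KK"
    define xs where "xs k = of_int k / (2*K) + \<theta>" for k :: int
    have "(\<Sum>k\<in>xs ` KK. (cmod (LINT \<xi>|lborel. G \<xi> * cnj (E k \<xi>)))\<^sup>2) \<le> 2*K * (LINT \<xi>|lborel. (cmod (G \<xi>))\<^sup>2)"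
    proof (rule bessel[OF _ _ iGG iGE iEE])
      show "finite (xs ` KK)" using \<open>finite KK\<close> by simp
      fix x y assume "x \<in> xs ` KK" "y \<in> xs ` KK"
      then obtain j k where "x = of_int j / (2*K) + \<theta>" "y = of_int k / (2*K) + \<theta>" by (auto simp: xs_def)
      then show "(LINT \<xi>|lborel. E x \<xi> * cnj (E y \<xi>)) = (if x = y then complex_of_real (2*K) else 0)"
        by (rule orthE)
    qed (use K in auto)
    moreover have "inj_on xs KK" using K by (auto simp: inj_on_def xs_def field_simps)
    ultimately have "(\<Sum>k\<in>KK. (cmod (h (xs k)))\<^sup>2) \<le> 2*K * (LINT \<xi>|lborel. (cmod (G \<xi>))\<^sup>2)"
      by (simp add: sum.reindex hE)
    then have "ennreal (\<Sum>k\<in>KK. (cmod (h (xs k)))\<^sup>2) \<le> ennreal (2*K) * (\<integral>\<^sup>+\<xi>. (cmod (G \<xi>))\<^sup>2 \<partial>lborel)"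
      unfolding intG using K by (simp add: ennreal_mult[symmetric])
    then show "(\<Sum>k\<in>KK. ennreal ((cmod (h (of_int k / (2*K) + \<theta>)))\<^sup>2)) \<le> ennreal (2*K) * (\<integral>\<^sup>+\<xi>. (cmod (G \<xi>))\<^sup>2 \<partial>lborel)"
      by (simp add: sum_ennreal xs_def)
  qed (use K in auto)
qed


lemma orth1':
  assumes L: "L > 0"
  shows "(LINT x|lborel. indicator {a..<a+L} x *\<^sub>R ce (of_int j * x / L)) = (if j = 0 then complex_of_real L else 0)"
proof -
  have "(LINT x|lborel. indicator {a..<a+L} x *\<^sub>R ce (of_int j * x / L)) =
        (LINT x|lborel. indicator {a..a+L} x *\<^sub>R ce (of_int j * x / L))"
  proof (rule integral_cong_AE)
    show "AE x in lborel. indicator {a..<a+L} x *\<^sub>R ce (of_int j * x / L) = indicator {a..a+L} x *\<^sub>R ce (of_int j * x / L)"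
      using AE_lborel_singleton[of "a+L"] by eventually_elim (auto simp: indicator_def)
  qed measurable
  also have "\<dots> = (if j = 0 then complex_of_real L else 0)" by (rule orth1[OF L])
  finally show ?thesis .
qed

lemma orth2:
  assumes R: "R > 0"
  shows "(LINT z|lebesgue. indicator ({-R..R} \<times> {0..<1}) z *\<^sub>R ce (of_int a * fst z / (2*R) + of_int b * snd z))
      = (if a = 0 \<and> b = 0 then complex_of_real (2*R) else 0)"
proof -
  define f where "f z = indicator ({-R..R} \<times> {0..<1}) z *\<^sub>R ce (of_int a * fst z / (2*R) + of_int b * snd z)" for z :: "real \<times> real"
  have box[measurable]: "{-R..R} \<times> {0..<1::real} \<in> sets borel" by (intro borel_Times) auto
  have cm[measurable]: "(\<lambda>z::real\<times>real. ce (of_int a * fst z / (2*R) + of_int b * snd z)) \<in> borel_measurable borel"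
    by (intro borel_measurable_continuous_onI continuous_intros) (use R in auto)
  have fm[measurable]: "f \<in> borel_measurable borel" unfolding f_def by measurable
  have "(LINT z|lebesgue. f z) = (LINT z|lborel. f z)"
    by (rule integral_completion) simp
  also have "\<dots> = (LINT z|(lborel \<Otimes>\<^sub>M lborel). f z)" by (simp only: lborel_prod)
  also have "\<dots> = (LINT x|lborel. LINT y|lborel. f (x, y))"
  proof (rule lborel_pair.integral_fst'[symmetric])
    have "integrable lborel f"
    proof -
      have "integrable lborel (\<lambda>z. indicator ({-R..R} \<times> {0..<1}) z *\<^sub>R ce (of_int a * fst z / (2*R) + of_int b * snd z))"
      proof (rule integrableI_bounded_set_indicator[where B=1])
        have "bounded ({-R..R} \<times> {0..<1::real})" by (intro bounded_Times) auto
        then show "emeasure lborel ({-R..R} \<times> {0..<1::real}) < \<infinity>" by (rule emeasure_bounded_finite)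
      qed auto
      then show ?thesis by (simp add: f_def[abs_def])
    qed
    then show "integrable (lborel \<Otimes>\<^sub>M lborel) f" by (simp only: lborel_prod)
  qed
  also have "\<dots> = (LINT x|lborel. (indicator {-R..-R + 2*R} x *\<^sub>R ce (of_int a * x / (2*R))) *
                     (if b = 0 then 1 else 0))"
  proof (rule Bochner_Integration.integral_cong[OF refl])
    fix x
    define C where "C = indicator {-R..-R + 2*R} x *\<^sub>R ce (of_int a * x / (2*R))"
    have e: "f (x, y) = C * (indicator {0..<0+1} y *\<^sub>R ce (of_int b * y / 1))" for y
      by (auto simp: f_def C_def indicator_def ce_add)
    have "(LINT y|lborel. f (x, y)) = C * (LINT y|lborel. indicator {0..<0+1} y *\<^sub>R ce (of_int b * y / 1))"
      by (simp only: e integral_mult_right_zero)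
    also have "\<dots> = C * (if b = 0 then 1 else 0)"
      by (simp only: orth1'[of 1 0 b] zero_less_one) simp
    finally show "(LINT y|lborel. f (x, y)) = (indicator {-R..-R + 2*R} x *\<^sub>R ce (of_int a * x / (2*R))) * (if b = 0 then 1 else 0)"
      by (simp add: C_def)
  qed
  also have "\<dots> = (LINT x|lborel. indicator {-R..-R + 2*R} x *\<^sub>R ce (of_int a * x / (2*R))) * (if b = 0 then 1 else 0)"
    by (rule integral_mult_left_zero)
  also have "\<dots> = (if a = 0 \<and> b = 0 then complex_of_real (2*R) else 0)"
    using orth1[of "2*R" "-R" a] R by simp
  finally show ?thesis by (simp add: f_def)
qed


lemma sigma_finite_lebesgue: "sigma_finite_measure (lebesgue :: 'a::euclidean_space measure)"
proof
  obtain A :: "'a set set" where A: "countable A" "A \<subseteq> sets lborel" "\<Union>A = space lborel"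
      "\<forall>a\<in>A. emeasure lborel a \<noteq> \<infinity>"
    using sigma_finite_measure.sigma_finite_countable[OF sigma_finite_lborel] by blast
  show "\<exists>A. countable A \<and> A \<subseteq> sets (lebesgue :: 'a measure) \<and> \<Union> A = space lebesgue \<and> (\<forall>a\<in>A. emeasure lebesgue a \<noteq> \<infinity>)"
    using A by (intro exI[of _ A]) (auto simp: emeasure_completion)
qed

lemma fst_lebesgue[measurable]: "fst \<in> borel_measurable (lebesgue :: (real \<times> real) measure)"
  by (rule measurable_completion) (simp add: borel_measurable_continuous_onI continuous_on_fst continuous_on_id)

lemma snd_lebesgue[measurable]: "snd \<in> borel_measurable (lebesgue :: (real \<times> real) measure)"
  by (rule measurable_completion) (simp add: borel_measurable_continuous_onI continuous_on_snd continuous_on_id)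

lemma box_lebesgue[measurable]: "A \<times> B \<in> sets (lebesgue :: (real \<times> real) measure)"
  if "A \<in> sets borel" "B \<in> sets borel" for A B :: "real set"
  using borel_Times[OF that] by (auto intro: sets_completionI_sets)

lemma emeasure_box_fin: "emeasure (lebesgue :: (real \<times> real) measure) ({a..b} \<times> {c..<d}) < \<infinity>"
proof -
  have "bounded ({a..b} \<times> {c..<d::real})" by (intro bounded_Times) auto
  then have "emeasure lborel ({a..b} \<times> {c..<d::real}) < \<infinity>" by (rule emeasure_bounded_finite)
  moreover have "{a..b} \<times> {c..<d::real} \<in> sets lborel" using borel_Times[of "{a..b}" "{c..<d}"] by simp
  ultimately show ?thesis by (simp add: emeasure_completion)
qed

lemma ce_lebesgue[measurable]: "(\<lambda>z::real\<times>real. ce (a * fst z + b * snd z)) \<in> borel_measurable lebesgue"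
  by measurable

lemma fourier_trunc_eq:
  "fourier_trunc f R \<xi> n = (LINT z|lebesgue. (indicator ({-R..R} \<times> {0..<1}) z *\<^sub>R f z) *
        cnj (indicator ({-R..R} \<times> {0..<1}) z *\<^sub>R ce (\<xi> * fst z + of_int n * snd z)))"
  unfolding fourier_trunc_def set_lebesgue_integral_def
  by (intro Bochner_Integration.integral_cong refl)
     (auto simp: indicator_def ce_def exp_cnj algebra_simps)

lemma fourier_trunc_meas[measurable]:
  assumes [measurable]: "f \<in> borel_measurable lebesgue"
  shows "(\<lambda>\<xi>. fourier_trunc f R \<xi> n) \<in> borel_measurable borel"
  unfolding fourier_trunc_eq
  by (rule sigma_finite_measure.borel_measurable_lebesgue_integral[OF sigma_finite_lebesgue])
     (simp add: cnj_ce, measurable)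


lemma plancherel_T:
  fixes f :: "real \<times> real \<Rightarrow> complex" and R :: real and S :: "int set"
  assumes R: "R > 0" and fm[measurable]: "f \<in> borel_measurable lebesgue"
    and fin: "(\<integral>\<^sup>+z. indicator (UNIV \<times> {0..<1}) z * ennreal ((cmod (f z))\<^sup>2) \<partial>lebesgue) < \<infinity>"
    and S: "finite S"
  shows "(\<Sum>n\<in>S. \<integral>\<^sup>+\<xi>. ennreal ((cmod (fourier_trunc f R \<xi> n))\<^sup>2) \<partial>lborel)
      \<le> (\<integral>\<^sup>+z. indicator (UNIV \<times> {0..<1}) z * ennreal ((cmod (f z))\<^sup>2) \<partial>lebesgue)"
proof -
  define B where "B = {-R..R} \<times> {0..<1::real}"
  have Bm[measurable]: "B \<in> sets lebesgue" unfolding B_def by measurable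
  have Bfin: "emeasure lebesgue B < \<infinity>" unfolding B_def by (rule emeasure_box_fin)
  define G where "G z = indicator B z *\<^sub>R f z" for z
  have Gm[measurable]: "G \<in> borel_measurable lebesgue" unfolding G_def by measurable
  have GV: "(\<integral>\<^sup>+z. ennreal ((cmod (G z))\<^sup>2) \<partial>lebesgue) \<le> (\<integral>\<^sup>+z. indicator (UNIV \<times> {0..<1}) z * ennreal ((cmod (f z))\<^sup>2) \<partial>lebesgue)"
    by (intro nn_integral_mono) (auto simp: G_def B_def indicator_def)
  have Gfin: "(\<integral>\<^sup>+z. ennreal ((cmod (G z))\<^sup>2) \<partial>lebesgue) < \<infinity>" using GV fin by (rule le_less_trans)
  have iG2: "integrable lebesgue (\<lambda>z. (cmod (G z))\<^sup>2)" by (rule sq_integrable[OF Gm Gfin])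
  have iG: "integrable lebesgue G"
    by (rule L1_of_L2[OF Gm Gfin Bm Bfin]) (simp add: G_def)
  have iGG: "integrable lebesgue (\<lambda>z. G z * cnj (G z))"
  proof -
    have "integrable lebesgue (\<lambda>z. complex_of_real ((cmod (G z))\<^sup>2))"
      using complex_of_real_integrable_eq[THEN iffD2, OF iG2] .
    then show ?thesis by (simp add: cmod_sq_cnj)
  qed
  define E where "E p z = indicator B z *\<^sub>R ce (fst p * fst z + of_int (snd p) * snd z)" for p :: "real \<times> int" and z :: "real \<times> real"
  have FE: "fourier_trunc f R \<xi> n = (LINT z|lebesgue. G z * cnj (E (\<xi>, n) z))" for \<xi> n
    unfolding fourier_trunc_eq G_def E_def B_def by simp
  have iGE: "integrable lebesgue (\<lambda>z. G z * cnj (E p z))" for p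
  proof (rule Bochner_Integration.integrable_bound[OF iG])
    show "AE z in lebesgue. norm (G z * cnj (E p z)) \<le> norm (G z)"
      by (auto simp: E_def norm_mult indicator_def)
  qed (simp add: E_def cnj_ce, measurable)
  have iEE: "integrable lebesgue (\<lambda>z. E p z * cnj (E q z))" for p q
  proof -
    have "integrable lebesgue (\<lambda>z. indicator B z *\<^sub>R (ce (fst p * fst z + of_int (snd p) * snd z) * cnj (ce (fst q * fst z + of_int (snd q) * snd z))))"
      by (rule integrableI_bounded_set_indicator[where B=1]) (use Bfin in \<open>auto simp: norm_mult cnj_ce\<close>)
    moreover have "E p z * cnj (E q z) = indicator B z *\<^sub>R (ce (fst p * fst z + of_int (snd p) * snd z) * cnj (ce (fst q * fst z + of_int (snd q) * snd z)))" for z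
      by (auto simp: E_def indicator_def)
    ultimately show ?thesis by (simp only:)
  qed
  have orthE: "(LINT z|lebesgue. E p z * cnj (E q z)) = (if p = q then complex_of_real (2*R) else 0)"
    if "p = (of_int j / (2*R) + \<theta>, m)" "q = (of_int k / (2*R) + \<theta>, n)" for p q j k m n \<theta>
  proof -
    have "E p z * cnj (E q z) = indicator ({-R..R} \<times> {0..<1}) z *\<^sub>R ce (of_int (j - k) * fst z / (2*R) + of_int (m - n) * snd z)" for z
    proof -
      have arg: "fst p * fst z + of_int (snd p) * snd z + - (fst q * fst z + of_int (snd q) * snd z)
          = of_int (j - k) * fst z / (2*R) + of_int (m - n) * snd z"
        unfolding that using R by (simp add: field_simps)
      have "ce (fst p * fst z + of_int (snd p) * snd z) * ce (- (fst q * fst z + of_int (snd q) * snd z))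
          = ce (of_int (j - k) * fst z / (2*R) + of_int (m - n) * snd z)"
        by (simp only: ce_add[symmetric] arg)
      then show ?thesis by (simp add: E_def cnj_ce indicator_def B_def)
    qed
    then have "(LINT z|lebesgue. E p z * cnj (E q z)) = (if j - k = 0 \<and> m - n = 0 then complex_of_real (2*R) else 0)"
      using orth2[of R "j - k" "m - n"] R by simp
    moreover have "(j - k = 0 \<and> m - n = 0) = (p = q)" unfolding that using R by (auto simp: field_simps)
    ultimately show ?thesis by simp
  qed
  have intG: "(\<integral>\<^sup>+z. ennreal ((cmod (G z))\<^sup>2) \<partial>lebesgue) = ennreal (LINT z|lebesgue. (cmod (G z))\<^sup>2)"
    using iG2 by (simp add: nn_integral_eq_integral)
  have "(\<integral>\<^sup>+\<xi>. (\<Sum>n\<in>S. ennreal ((cmod (fourier_trunc f R \<xi> n))\<^sup>2)) \<partial>lborel) \<le> (\<integral>\<^sup>+z. ennreal ((cmod (G z))\<^sup>2) \<partial>lebesgue)"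
  proof (rule theta_lemma[of "2*R"])
    show "(\<lambda>\<xi>. \<Sum>n\<in>S. ennreal ((cmod (fourier_trunc f R \<xi> n))\<^sup>2)) \<in> borel_measurable borel" by measurable
    fix \<theta> :: real and KK :: "int set" assume "\<theta> \<in> {0..1/(2*R)}" "finite KK"
    define ps where "ps kn = (of_int (fst kn) / (2*R) + \<theta>, snd kn)" for kn :: "int \<times> int"
    have "(\<Sum>p\<in>ps ` (KK \<times> S). (cmod (LINT z|lebesgue. G z * cnj (E p z)))\<^sup>2) \<le> 2*R * (LINT z|lebesgue. (cmod (G z))\<^sup>2)"
    proof (rule bessel[OF _ _ iGG iGE iEE])
      show "finite (ps ` (KK \<times> S))" using \<open>finite KK\<close> S by simp
      fix p q assume "p \<in> ps ` (KK \<times> S)" "q \<in> ps ` (KK \<times> S)"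
      then obtain j m k n where "p = (of_int j / (2*R) + \<theta>, m)" "q = (of_int k / (2*R) + \<theta>, n)" by (auto simp: ps_def)
      then show "(LINT z|lebesgue. E p z * cnj (E q z)) = (if p = q then complex_of_real (2*R) else 0)"
        by (rule orthE)
    qed (use R in auto)
    moreover have inj: "inj_on ps (KK \<times> S)" using R by (auto simp: inj_on_def ps_def field_simps)
    ultimately have "(\<Sum>kn\<in>KK \<times> S. (cmod (LINT z|lebesgue. G z * cnj (E (ps kn) z)))\<^sup>2) \<le> 2*R * (LINT z|lebesgue. (cmod (G z))\<^sup>2)"
      by (simp only: sum.reindex[OF inj] o_def)
    then have "(\<Sum>kn\<in>KK \<times> S. (cmod (fourier_trunc f R (of_int (fst kn) / (2*R) + \<theta>) (snd kn)))\<^sup>2) \<le> 2*R * (LINT z|lebesgue. (cmod (G z))\<^sup>2)"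
      by (simp add: FE ps_def)
    then have "(\<Sum>k\<in>KK. \<Sum>n\<in>S. (cmod (fourier_trunc f R (of_int k / (2*R) + \<theta>) n))\<^sup>2) \<le> 2*R * (LINT z|lebesgue. (cmod (G z))\<^sup>2)"
      by (simp add: sum.cartesian_product split_def)
    then have "ennreal (\<Sum>k\<in>KK. \<Sum>n\<in>S. (cmod (fourier_trunc f R (of_int k / (2*R) + \<theta>) n))\<^sup>2) \<le> ennreal (2*R) * (\<integral>\<^sup>+z. ennreal ((cmod (G z))\<^sup>2) \<partial>lebesgue)"
      unfolding intG using R by (simp add: ennreal_mult[symmetric])
    then show "(\<Sum>k\<in>KK. \<Sum>n\<in>S. ennreal ((cmod (fourier_trunc f R (of_int k / (2*R) + \<theta>) n))\<^sup>2)) \<le> ennreal (2*R) * (\<integral>\<^sup>+z. ennreal ((cmod (G z))\<^sup>2) \<partial>lebesgue)"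
      by (simp add: sum_ennreal sum_nonneg)
  qed (use R in auto)
  also note GV
  finally have fin2: "(\<integral>\<^sup>+\<xi>. (\<Sum>n\<in>S. ennreal ((cmod (fourier_trunc f R \<xi> n))\<^sup>2)) \<partial>lborel) \<le> (\<integral>\<^sup>+z. indicator (UNIV \<times> {0..<1}) z * ennreal ((cmod (f z))\<^sup>2) \<partial>lebesgue)" .
  have mF: "(\<lambda>\<xi>. ennreal ((cmod (fourier_trunc f R \<xi> n))\<^sup>2)) \<in> borel_measurable lborel" for n
    unfolding measurable_lborel2 by measurable
  show ?thesis using fin2 by (simp only: nn_integral_sum[OF mF])
qed


lemma sq_tri: "(cmod a)\<^sup>2 \<le> 2 * (cmod (a - b))\<^sup>2 + 2 * (cmod b)\<^sup>2"
proof -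
  have "cmod a \<le> cmod (a - b) + cmod b" using norm_triangle_ineq[of "a - b" b] by simp
  then have "(cmod a)\<^sup>2 \<le> (cmod (a - b) + cmod b)\<^sup>2" by (intro power_mono) auto
  also have "\<dots> \<le> 2 * (cmod (a - b))\<^sup>2 + 2 * (cmod b)\<^sup>2"
    using zero_le_power2[of "cmod (a - b) - cmod b"] by (simp add: power2_sum power2_diff)
  finally show ?thesis .
qed

lemma sum_le_count_space:
  fixes h :: "int \<Rightarrow> ennreal"
  assumes "finite S"
  shows "(\<Sum>n\<in>S. h n) \<le> (\<integral>\<^sup>+n. h n \<partial>count_space UNIV)"
proof -
  have "(\<Sum>n\<in>S. h n) = (\<integral>\<^sup>+n. h n \<partial>count_space S)" using assms by (simp add: nn_integral_count_space_finite)
  also have "\<dots> = (\<integral>\<^sup>+n. h n * indicator S n \<partial>count_space UNIV)" by (rule nn_integral_count_space_indicator) (simp add: NO_MATCH_def)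
  also have "\<dots> \<le> (\<integral>\<^sup>+n. h n \<partial>count_space UNIV)" by (intro nn_integral_mono) (simp add: indicator_def)
  finally show ?thesis .
qed

lemma g_bound:
  assumes f: "in_L2_RT f" and g: "is_L2_fourier f g" and S: "finite S"
  shows "(\<Sum>n\<in>S. \<integral>\<^sup>+\<xi>. ennreal ((cmod (g \<xi> n))\<^sup>2) \<partial>lebesgue)
      \<le> 2 * (\<integral>\<^sup>+z. indicator (UNIV \<times> {0..<1::real}) z * ennreal ((cmod (f z))\<^sup>2) \<partial>lebesgue)"
proof -
  define V where "V = (\<integral>\<^sup>+z. indicator (UNIV \<times> {0..<1::real}) z * ennreal ((cmod (f z))\<^sup>2) \<partial>lebesgue)"
  define D where "D R = (\<integral>\<^sup>+n. (\<integral>\<^sup>+\<xi>. ennreal ((cmod (g \<xi> n - fourier_trunc f R \<xi> n))\<^sup>2) \<partial>lebesgue) \<partial>count_space UNIV)" for R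
  have fm[measurable]: "f \<in> borel_measurable lebesgue" and Vfin: "V < \<infinity>"
    using f unfolding in_L2_RT_def V_def by auto
  have gm[measurable]: "(\<lambda>\<xi>. g \<xi> n) \<in> borel_measurable lebesgue" for n
    using g unfolding is_L2_fourier_def by auto
  have Dlim: "(D \<longlongrightarrow> 0) at_top" using g unfolding is_L2_fourier_def D_def by auto
  have Fm[measurable]: "(\<lambda>\<xi>. fourier_trunc f R \<xi> n) \<in> borel_measurable lebesgue" for R n
    by (rule measurable_completion) (simp add: fourier_trunc_meas[OF fm])
  define LHS where "LHS = (\<Sum>n\<in>S. \<integral>\<^sup>+\<xi>. ennreal ((cmod (g \<xi> n))\<^sup>2) \<partial>lebesgue)"
  have bound: "LHS \<le> 2 * D R + 2 * V" if R: "R > 0" for R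
  proof -
    have "LHS \<le> (\<Sum>n\<in>S. \<integral>\<^sup>+\<xi>. 2 * ennreal ((cmod (g \<xi> n - fourier_trunc f R \<xi> n))\<^sup>2)
                         + 2 * ennreal ((cmod (fourier_trunc f R \<xi> n))\<^sup>2) \<partial>lebesgue)"
      unfolding LHS_def
    proof (intro sum_mono nn_integral_mono)
      fix n \<xi>
      have "(cmod (g \<xi> n))\<^sup>2 \<le> 2 * (cmod (g \<xi> n - fourier_trunc f R \<xi> n))\<^sup>2 + 2 * (cmod (fourier_trunc f R \<xi> n))\<^sup>2"
        by (rule sq_tri)
      then have "ennreal ((cmod (g \<xi> n))\<^sup>2) \<le> ennreal (2 * (cmod (g \<xi> n - fourier_trunc f R \<xi> n))\<^sup>2 + 2 * (cmod (fourier_trunc f R \<xi> n))\<^sup>2)"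
        by (rule ennreal_leI)
      also have "\<dots> = 2 * ennreal ((cmod (g \<xi> n - fourier_trunc f R \<xi> n))\<^sup>2)
                         + 2 * ennreal ((cmod (fourier_trunc f R \<xi> n))\<^sup>2)"
        by (simp add: ennreal_plus ennreal_mult)
      finally show "ennreal ((cmod (g \<xi> n))\<^sup>2) \<le> 2 * ennreal ((cmod (g \<xi> n - fourier_trunc f R \<xi> n))\<^sup>2)
                         + 2 * ennreal ((cmod (fourier_trunc f R \<xi> n))\<^sup>2)" .
    qed
    also have "\<dots> = 2 * (\<Sum>n\<in>S. \<integral>\<^sup>+\<xi>. ennreal ((cmod (g \<xi> n - fourier_trunc f R \<xi> n))\<^sup>2) \<partial>lebesgue)
                 + 2 * (\<Sum>n\<in>S. \<integral>\<^sup>+\<xi>. ennreal ((cmod (fourier_trunc f R \<xi> n))\<^sup>2) \<partial>lebesgue)"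
      by (simp add: nn_integral_add nn_integral_cmult sum.distrib sum_distrib_left)
    also have "\<dots> \<le> 2 * D R + 2 * V"
    proof (intro add_mono mult_left_mono order.refl)
      show "(\<Sum>n\<in>S. \<integral>\<^sup>+\<xi>. ennreal ((cmod (g \<xi> n - fourier_trunc f R \<xi> n))\<^sup>2) \<partial>lebesgue) \<le> D R"
        unfolding D_def by (rule sum_le_count_space[OF S])
      have "(\<Sum>n\<in>S. \<integral>\<^sup>+\<xi>. ennreal ((cmod (fourier_trunc f R \<xi> n))\<^sup>2) \<partial>lebesgue)
          = (\<Sum>n\<in>S. \<integral>\<^sup>+\<xi>. ennreal ((cmod (fourier_trunc f R \<xi> n))\<^sup>2) \<partial>lborel)"
        by (simp add: nn_integral_completion)
      also have "\<dots> \<le> V" unfolding V_def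
        by (rule plancherel_T[OF R fm _ S]) (use f in \<open>simp add: in_L2_RT_def\<close>)
      finally show "(\<Sum>n\<in>S. \<integral>\<^sup>+\<xi>. ennreal ((cmod (fourier_trunc f R \<xi> n))\<^sup>2) \<partial>lebesgue) \<le> V" .
    qed auto
    finally show ?thesis .
  qed
  have lim: "((\<lambda>R. 2 * D R + 2 * V) \<longlongrightarrow> 2 * 0 + 2 * V) at_top"
    by (intro tendsto_add tendsto_const ennreal_tendsto_cmult Dlim) auto
  have "LHS \<le> 2 * 0 + 2 * V"
  proof (rule tendsto_le[OF trivial_limit_at_top_linorder lim tendsto_const])
    show "\<forall>\<^sub>F R in at_top. LHS \<le> 2 * D R + 2 * V"
      using eventually_gt_at_top[of "0::real"] by eventually_elim (rule bound)
  qed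
  then show ?thesis by (simp add: LHS_def V_def)
qed


lemma cs_card:
  fixes z :: "'i \<Rightarrow> complex"
  shows "(cmod (\<Sum>i\<in>I. z i))\<^sup>2 \<le> real (card I) * (\<Sum>i\<in>I. (cmod (z i))\<^sup>2)"
proof -
  have "(cmod (\<Sum>i\<in>I. z i))\<^sup>2 \<le> (\<Sum>i\<in>I. cmod (z i))\<^sup>2"
    by (intro power_mono norm_sum) simp
  also have "\<dots> = (\<Sum>i\<in>I. 1 * cmod (z i))\<^sup>2" by simp
  also have "\<dots> \<le> (\<Sum>i\<in>I. 1\<^sup>2) * (\<Sum>i\<in>I. (cmod (z i))\<^sup>2)" by (rule Cauchy_Schwarz_ineq_sum)
  finally show ?thesis by simp
qed

lemma cs_weighted:
  fixes x w :: "'i \<Rightarrow> real"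
  assumes "\<And>i. i \<in> I \<Longrightarrow> w i > 0"
  shows "(\<Sum>i\<in>I. x i)\<^sup>2 \<le> (\<Sum>i\<in>I. 1 / w i) * (\<Sum>i\<in>I. w i * (x i)\<^sup>2)"
proof -
  have "(\<Sum>i\<in>I. x i) = (\<Sum>i\<in>I. (1 / sqrt (w i)) * (sqrt (w i) * x i))"
  proof (intro sum.cong refl)
    fix i assume "i \<in> I"
    then have "sqrt (w i) > 0" using assms by simp
    then show "x i = (1 / sqrt (w i)) * (sqrt (w i) * x i)" by (simp add: field_simps)
  qed
  then have "(\<Sum>i\<in>I. x i)\<^sup>2 = (\<Sum>i\<in>I. (1 / sqrt (w i)) * (sqrt (w i) * x i))\<^sup>2" by (simp only:)
  also have "\<dots> \<le> (\<Sum>i\<in>I. (1 / sqrt (w i))\<^sup>2) * (\<Sum>i\<in>I. (sqrt (w i) * x i)\<^sup>2)"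
    by (rule Cauchy_Schwarz_ineq_sum)
  also have "\<dots> = (\<Sum>i\<in>I. 1 / w i) * (\<Sum>i\<in>I. w i * (x i)\<^sup>2)"
    using assms by (intro arg_cong2[where f="(*)"] sum.cong refl) (simp_all add: power_divide power_mult_distrib less_imp_le)
  finally show ?thesis .
qed

lemma quartic_alg:
  fixes S :: "int set" and a :: "int \<Rightarrow> complex" and W :: real
  assumes S: "finite S"
    and W: "\<And>m. (\<Sum>p\<in>{p\<in>S\<times>S. fst p + snd p = m \<and> fst p \<noteq> snd p}. 1 / real_of_int \<bar>fst p - snd p\<bar>) \<le> W"
  defines "b \<equiv> \<lambda>m. (\<Sum>p\<in>{p\<in>S\<times>S. fst p + snd p = m}. a (fst p) * a (snd p))"
  shows "(\<Sum>m\<in>(\<lambda>p. fst p + snd p) ` (S\<times>S). (cmod (b m))\<^sup>2)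
     \<le> 2 * (\<Sum>n\<in>S. (cmod (a n))^4) + 2 * W * (\<Sum>p\<in>{p\<in>S\<times>S. fst p \<noteq> snd p}. real_of_int \<bar>fst p - snd p\<bar> * (cmod (a (fst p)))\<^sup>2 * (cmod (a (snd p)))\<^sup>2)"
proof -
  define T where "T = (\<lambda>p. fst p + snd p) ` (S\<times>S)"
  have T: "finite T" using S by (simp add: T_def)
  define Dg where "Dg m = {p\<in>S\<times>S. fst p + snd p = m \<and> fst p = snd p}" for m
  define Og where "Og m = {p\<in>S\<times>S. fst p + snd p = m \<and> fst p \<noteq> snd p}" for m
  define c where "c p = a (fst p) * a (snd p)" for p
  define v where "v p = real_of_int \<bar>fst p - snd p\<bar> * (cmod (a (fst p)))\<^sup>2 * (cmod (a (snd p)))\<^sup>2" for p :: "int \<times> int"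
  have W0: "W \<ge> 0" using W[of 0] by (meson order_trans sum_nonneg divide_nonneg_nonneg abs_ge_zero of_int_nonneg zero_le_one)
  have split: "b m = sum c (Dg m) + sum c (Og m)" for m
  proof -
    have "{p\<in>S\<times>S. fst p + snd p = m} = Dg m \<union> Og m" by (auto simp: Dg_def Og_def)
    moreover have "Dg m \<inter> Og m = {}" by (auto simp: Dg_def Og_def)
    moreover have "finite (Dg m)" "finite (Og m)" using S by (auto simp: Dg_def Og_def intro: finite_subset[of _ "S\<times>S"])
    ultimately show ?thesis unfolding b_def c_def by (simp add: sum.union_disjoint)
  qed
  have bm: "(cmod (b m))\<^sup>2 \<le> 2 * (cmod (sum c (Dg m)))\<^sup>2 + 2 * (cmod (sum c (Og m)))\<^sup>2" for m
    using sq_tri[of "b m" "sum c (Og m)"] by (simp add: split)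
  have Dm: "(cmod (sum c (Dg m)))\<^sup>2 \<le> (\<Sum>p\<in>Dg m. (cmod (a (fst p)))^4)" for m
  proof -
    have finD: "finite (Dg m)" using S by (auto simp: Dg_def intro: finite_subset[of _ "S\<times>S"])
    have "\<forall>x\<in>Dg m. \<forall>y\<in>Dg m. x = y"
    proof (intro ballI)
      fix x y assume "x \<in> Dg m" "y \<in> Dg m"
      then have "fst x = snd x" "fst y = snd y" "fst x + snd x = fst y + snd y" by (auto simp: Dg_def)
      then show "x = y" by (simp add: prod_eq_iff)
    qed
    then have "card (Dg m) \<le> Suc 0" using card_le_Suc0_iff_eq[OF finD] by blast
    then have "real (card (Dg m)) \<le> 1" by simp
    then have "real (card (Dg m)) * (\<Sum>p\<in>Dg m. (cmod (c p))\<^sup>2) \<le> 1 * (\<Sum>p\<in>Dg m. (cmod (c p))\<^sup>2)"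
      by (rule mult_right_mono) (simp add: sum_nonneg)
    then have "(cmod (sum c (Dg m)))\<^sup>2 \<le> 1 * (\<Sum>p\<in>Dg m. (cmod (c p))\<^sup>2)"
      using cs_card[of c "Dg m"] by linarith
    also have "\<dots> = (\<Sum>p\<in>Dg m. (cmod (a (fst p)))^4)"
      unfolding mult_1
    proof (intro sum.cong refl)
      fix p assume "p \<in> Dg m"
      then have "snd p = fst p" by (simp add: Dg_def)
      moreover have "(x * x)\<^sup>2 = x^4" for x :: real by (simp add: power4_eq_xxxx power2_eq_square)
      ultimately show "(cmod (c p))\<^sup>2 = (cmod (a (fst p)))^4" by (simp add: c_def norm_mult)
    qed
    finally show ?thesis .
  qed
  have Om: "(cmod (sum c (Og m)))\<^sup>2 \<le> W * (\<Sum>p\<in>Og m. v p)" for m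
  proof -
    have "(cmod (sum c (Og m)))\<^sup>2 \<le> (\<Sum>p\<in>Og m. cmod (c p))\<^sup>2"
      by (intro power_mono norm_sum) simp
    also have "\<dots> \<le> (\<Sum>p\<in>Og m. 1 / real_of_int \<bar>fst p - snd p\<bar>) * (\<Sum>p\<in>Og m. real_of_int \<bar>fst p - snd p\<bar> * (cmod (c p))\<^sup>2)"
      by (rule cs_weighted) (auto simp: Og_def)
    also have "(\<Sum>p\<in>Og m. real_of_int \<bar>fst p - snd p\<bar> * (cmod (c p))\<^sup>2) = (\<Sum>p\<in>Og m. v p)"
      by (simp add: v_def c_def norm_mult power_mult_distrib mult.assoc)
    also have "(\<Sum>p\<in>Og m. 1 / real_of_int \<bar>fst p - snd p\<bar>) * (\<Sum>p\<in>Og m. v p) \<le> W * (\<Sum>p\<in>Og m. v p)"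
    proof (rule mult_right_mono)
      show "(\<Sum>p\<in>Og m. 1 / real_of_int \<bar>fst p - snd p\<bar>) \<le> W" using W[of m] by (simp add: Og_def)
      show "0 \<le> (\<Sum>p\<in>Og m. v p)" by (intro sum_nonneg) (simp add: v_def)
    qed
    finally show ?thesis by simp
  qed
  have "(\<Sum>m\<in>T. (cmod (b m))\<^sup>2) \<le> (\<Sum>m\<in>T. 2 * (\<Sum>p\<in>Dg m. (cmod (a (fst p)))^4) + 2 * (W * (\<Sum>p\<in>Og m. v p)))"
    by (intro sum_mono order_trans[OF bm] add_mono mult_left_mono Dm Om) auto
  also have "\<dots> = 2 * (\<Sum>m\<in>T. \<Sum>p\<in>Dg m. (cmod (a (fst p)))^4) + 2 * W * (\<Sum>m\<in>T. \<Sum>p\<in>Og m. v p)"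
    by (simp add: sum.distrib sum_distrib_left mult.assoc)
  also have "(\<Sum>m\<in>T. \<Sum>p\<in>Dg m. (cmod (a (fst p)))^4) = (\<Sum>p\<in>{p\<in>S\<times>S. fst p = snd p}. (cmod (a (fst p)))^4)"
  proof -
    have "(\<Sum>m\<in>T. \<Sum>p\<in>Dg m. (cmod (a (fst p)))^4) = (\<Sum>m\<in>T. \<Sum>p\<in>{p\<in>{p\<in>S\<times>S. fst p = snd p}. fst p + snd p = m}. (cmod (a (fst p)))^4)"
      by (intro sum.cong refl) (auto simp: Dg_def)
    also have "\<dots> = (\<Sum>p\<in>{p\<in>S\<times>S. fst p = snd p}. (cmod (a (fst p)))^4)"
    proof (rule sum.group[OF _ T])
      show "(\<lambda>p. fst p + snd p) ` {p\<in>S\<times>S. fst p = snd p} \<subseteq> T" unfolding T_def by (rule image_mono) auto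
    qed (use S in auto)
    finally show ?thesis .
  qed
  also have "(\<Sum>p\<in>{p\<in>S\<times>S. fst p = snd p}. (cmod (a (fst p)))^4) = (\<Sum>n\<in>S. (cmod (a n))^4)"
  proof -
    have "{p\<in>S\<times>S. fst p = snd p} = (\<lambda>n. (n, n)) ` S" by auto
    moreover have "inj_on (\<lambda>n. (n, n)) S" by (auto simp: inj_on_def)
    ultimately show ?thesis by (simp add: sum.reindex)
  qed
  also have "(\<Sum>m\<in>T. \<Sum>p\<in>Og m. v p) = (\<Sum>p\<in>{p\<in>S\<times>S. fst p \<noteq> snd p}. v p)"
  proof -
    have "(\<Sum>m\<in>T. \<Sum>p\<in>Og m. v p) = (\<Sum>m\<in>T. \<Sum>p\<in>{p\<in>{p\<in>S\<times>S. fst p \<noteq> snd p}. fst p + snd p = m}. v p)"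
      by (intro sum.cong refl) (auto simp: Og_def)
    also have "\<dots> = (\<Sum>p\<in>{p\<in>S\<times>S. fst p \<noteq> snd p}. v p)"
    proof (rule sum.group[OF _ T])
      show "(\<lambda>p. fst p + snd p) ` {p\<in>S\<times>S. fst p \<noteq> snd p} \<subseteq> T" unfolding T_def by (rule image_mono) auto
    qed (use S in auto)
    finally show ?thesis .
  qed
  finally show ?thesis by (simp add: T_def v_def)
qed


lemma parseval_T:
  fixes T :: "int set" and b :: "int \<Rightarrow> complex"
  assumes T: "finite T"
  shows "(\<integral>\<^sup>+y. indicator {0..<1} y * ennreal ((cmod (\<Sum>m\<in>T. ce (of_int m * y) * b m))\<^sup>2) \<partial>lborel)
     = ennreal (\<Sum>m\<in>T. (cmod (b m))\<^sup>2)"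
proof -
  define Q where "Q y = (\<Sum>m\<in>T. ce (of_int m * y) * b m)" for y
  have Qm[measurable]: "Q \<in> borel_measurable borel"
    unfolding Q_def by (intro borel_measurable_continuous_onI continuous_intros)
  have Qb: "(cmod (Q y))\<^sup>2 \<le> (\<Sum>m\<in>T. cmod (b m))\<^sup>2" for y
  proof (rule power_mono)
    show "cmod (Q y) \<le> (\<Sum>m\<in>T. cmod (b m))" unfolding Q_def
      using norm_sum[of "\<lambda>m. ce (of_int m * y) * b m" T] by (simp add: norm_mult)
  qed simp
  have iQ: "integrable lborel (\<lambda>y. indicator {0..<1::real} y *\<^sub>R (cmod (Q y))\<^sup>2)"
    by (rule integrableI_bounded_set_indicator[where B="(\<Sum>m\<in>T. cmod (b m))\<^sup>2"]) (use Qb in auto)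
  have "(\<integral>\<^sup>+y. indicator {0..<1} y * ennreal ((cmod (Q y))\<^sup>2) \<partial>lborel)
      = (\<integral>\<^sup>+y. ennreal (indicator {0..<1::real} y *\<^sub>R (cmod (Q y))\<^sup>2) \<partial>lborel)"
    by (intro nn_integral_cong) (simp add: indicator_def)
  also have "\<dots> = ennreal (LINT y|lborel. indicator {0..<1::real} y *\<^sub>R (cmod (Q y))\<^sup>2)"
    by (rule nn_integral_eq_integral[OF iQ]) simp
  also have "(LINT y|lborel. indicator {0..<1::real} y *\<^sub>R (cmod (Q y))\<^sup>2) = (\<Sum>m\<in>T. (cmod (b m))\<^sup>2)"
  proof -
    have ie: "integrable lborel (\<lambda>y. indicator {0..<0+1::real} y *\<^sub>R ce (of_int j * y / 1))" for j :: int
      by (rule integrableI_bounded_set_indicator[where B=1]) auto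
    have pt: "complex_of_real (indicator {0..<1::real} y *\<^sub>R (cmod (Q y))\<^sup>2)
        = (\<Sum>m\<in>T. \<Sum>m'\<in>T. (b m * cnj (b m')) * (indicator {0..<0+1::real} y *\<^sub>R ce (of_int (m - m') * y / 1)))" for y
    proof -
      have "complex_of_real ((cmod (Q y))\<^sup>2) = Q y * cnj (Q y)" by (simp add: cmod_sq_cnj)
      also have "\<dots> = (\<Sum>m\<in>T. \<Sum>m'\<in>T. (b m * cnj (b m')) * ce (of_int (m - m') * y))"
        unfolding Q_def
        apply (simp add: sum_distrib_left sum_distrib_right cnj_ce ce_add[symmetric] algebra_simps)
        by (rule sum.swap)
      finally show ?thesis
        by (simp add: indicator_def sum_distrib_left)
    qed
    have "complex_of_real (LINT y|lborel. indicator {0..<1::real} y *\<^sub>R (cmod (Q y))\<^sup>2)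
        = (CLINT y|lborel. complex_of_real (indicator {0..<1::real} y *\<^sub>R (cmod (Q y))\<^sup>2))"
      by (rule integral_complex_of_real[symmetric])
    also have "\<dots> = (CLINT y|lborel. (\<Sum>m\<in>T. \<Sum>m'\<in>T. (b m * cnj (b m')) * (indicator {0..<0+1::real} y *\<^sub>R ce (of_int (m - m') * y / 1))))"
      by (simp only: pt)
    also have "\<dots> = (\<Sum>m\<in>T. \<Sum>m'\<in>T. (b m * cnj (b m')) * (CLINT y|lborel. indicator {0..<0+1::real} y *\<^sub>R ce (of_int (m - m') * y / 1)))"
    proof -
      define F where "F m m' y = indicator {0..<0+1::real} y *\<^sub>R ce (of_int (m - m') * y / 1)" for m m' :: int and y :: real
      have iF: "integrable lborel (F m m')" for m m' unfolding F_def by (rule ie)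
      have "(CLINT y|lborel. (\<Sum>m\<in>T. \<Sum>m'\<in>T. (b m * cnj (b m')) * F m m' y))
          = (\<Sum>m\<in>T. CLINT y|lborel. (\<Sum>m'\<in>T. (b m * cnj (b m')) * F m m' y))"
        by (rule Bochner_Integration.integral_sum) (intro Bochner_Integration.integrable_sum Bochner_Integration.integrable_mult_right iF)
      also have "\<dots> = (\<Sum>m\<in>T. \<Sum>m'\<in>T. CLINT y|lborel. (b m * cnj (b m')) * F m m' y)"
        by (intro sum.cong refl Bochner_Integration.integral_sum Bochner_Integration.integrable_mult_right iF)
      also have "\<dots> = (\<Sum>m\<in>T. \<Sum>m'\<in>T. (b m * cnj (b m')) * (CLINT y|lborel. F m m' y))"
        by (simp only: integral_mult_right_zero)
      finally show ?thesis by (simp only: F_def)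
    qed
    also have "\<dots> = (\<Sum>m\<in>T. \<Sum>m'\<in>T. (b m * cnj (b m')) * (if m - m' = 0 then 1 else 0))"
      by (simp only: orth1'[OF zero_less_one] of_real_1)
    also have "\<dots> = (\<Sum>m\<in>T. complex_of_real ((cmod (b m))\<^sup>2))"
      using T by (simp add: if_distrib sum.delta cmod_sq_cnj cong: if_cong)
    also have "\<dots> = complex_of_real (\<Sum>m\<in>T. (cmod (b m))\<^sup>2)" by simp
    finally show ?thesis by (simp only: of_real_eq_iff)
  qed
  finally show ?thesis by (simp add: Q_def)
qed


lemma square_expand:
  fixes S :: "int set" and a :: "int \<Rightarrow> complex"
  assumes S: "finite S"
  shows "(\<Sum>n\<in>S. ce (of_int n * y) * a n)\<^sup>2 = (\<Sum>m\<in>(\<lambda>p. fst p + snd p) ` (S\<times>S). ce (of_int m * y) *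
           (\<Sum>p\<in>{p\<in>S\<times>S. fst p + snd p = m}. a (fst p) * a (snd p)))"
proof -
  define T where "T = (\<lambda>p. fst p + snd p) ` (S\<times>S)"
  have T: "finite T" using S by (simp add: T_def)
  have "(\<Sum>n\<in>S. ce (of_int n * y) * a n)\<^sup>2 = (\<Sum>p\<in>S\<times>S. ce (of_int (fst p + snd p) * y) * (a (fst p) * a (snd p)))"
    by (simp add: power2_eq_square sum_product sum.cartesian_product split_def ce_add[symmetric] algebra_simps)
  also have "\<dots> = (\<Sum>m\<in>T. \<Sum>p\<in>{p\<in>S\<times>S. fst p + snd p = m}. ce (of_int (fst p + snd p) * y) * (a (fst p) * a (snd p)))"
    by (rule sum.group[symmetric]) (use S T in \<open>auto simp: T_def\<close>)
  also have "\<dots> = (\<Sum>m\<in>T. ce (of_int m * y) * (\<Sum>p\<in>{p\<in>S\<times>S. fst p + snd p = m}. a (fst p) * a (snd p)))"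
    by (intro sum.cong refl) (auto simp: sum_distrib_left)
  finally show ?thesis by (simp add: T_def)
qed

lemma quartic:
  fixes S :: "int set" and a :: "int \<Rightarrow> complex" and W :: real
  assumes S: "finite S"
    and W: "\<And>m. (\<Sum>p\<in>{p\<in>S\<times>S. fst p + snd p = m \<and> fst p \<noteq> snd p}. 1 / real_of_int \<bar>fst p - snd p\<bar>) \<le> W"
  shows "(\<integral>\<^sup>+y. indicator {0..<1} y * ennreal ((cmod (\<Sum>n\<in>S. ce (of_int n * y) * a n))^4) \<partial>lborel)
     \<le> ennreal (2 * (\<Sum>n\<in>S. (cmod (a n))^4) + 2 * W * (\<Sum>p\<in>{p\<in>S\<times>S. fst p \<noteq> snd p}. real_of_int \<bar>fst p - snd p\<bar> * (cmod (a (fst p)))\<^sup>2 * (cmod (a (snd p)))\<^sup>2))"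
proof -
  define T where "T = (\<lambda>p. fst p + snd p) ` (S\<times>S)"
  have T: "finite T" using S by (simp add: T_def)
  define b where "b m = (\<Sum>p\<in>{p\<in>S\<times>S. fst p + snd p = m}. a (fst p) * a (snd p))" for m
  have "(cmod (\<Sum>n\<in>S. ce (of_int n * y) * a n))^4 = (cmod (\<Sum>m\<in>T. ce (of_int m * y) * b m))\<^sup>2" for y
  proof -
    have "(cmod (\<Sum>n\<in>S. ce (of_int n * y) * a n))^4 = (cmod ((\<Sum>n\<in>S. ce (of_int n * y) * a n)\<^sup>2))\<^sup>2"
      by (simp add: norm_power power_mult[symmetric])
    then show ?thesis by (simp add: square_expand[OF S] T_def b_def)
  qed
  then have "(\<integral>\<^sup>+y. indicator {0..<1} y * ennreal ((cmod (\<Sum>n\<in>S. ce (of_int n * y) * a n))^4) \<partial>lborel)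
      = (\<integral>\<^sup>+y. indicator {0..<1} y * ennreal ((cmod (\<Sum>m\<in>T. ce (of_int m * y) * b m))\<^sup>2) \<partial>lborel)"
    by simp
  also have "\<dots> = ennreal (\<Sum>m\<in>T. (cmod (b m))\<^sup>2)" by (rule parseval_T[OF T])
  also have "\<dots> \<le> ennreal (2 * (\<Sum>n\<in>S. (cmod (a n))^4) + 2 * W * (\<Sum>p\<in>{p\<in>S\<times>S. fst p \<noteq> snd p}. real_of_int \<bar>fst p - snd p\<bar> * (cmod (a (fst p)))\<^sup>2 * (cmod (a (snd p)))\<^sup>2))"
    by (rule ennreal_leI) (use quartic_alg[OF S W, of a] in \<open>simp add: T_def b_def\<close>)
  finally show ?thesis .
qed

lemma harm_bound: "n \<ge> 1 \<Longrightarrow> (\<Sum>j\<in>{1..n}. 1 / real j) \<le> 1 + ln (real n)"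
proof (induction n rule: dec_induct)
  case base then show ?case by simp
next
  case (step n)
  have n: "real n \<ge> 1" using step by simp
  have "ln (real n / real (Suc n)) \<le> real n / real (Suc n) - 1"
    by (rule ln_le_minus_one) (use n in simp)
  also have "\<dots> = - 1 / real (Suc n)" by (simp add: field_simps)
  finally have "1 / real (Suc n) \<le> ln (real (Suc n)) - ln (real n)"
    using n by (simp add: ln_div)
  then show ?case using step by simp
qed

lemma harm_int:
  fixes K :: nat assumes K: "K \<ge> 1"
  shows "(\<Sum>d\<in>{d::int. d \<noteq> 0 \<and> \<bar>d\<bar> \<le> int K}. 1 / real_of_int \<bar>d\<bar>) \<le> 2 * (1 + ln (real K))"
proof -
  have eq: "{d::int. d \<noteq> 0 \<and> \<bar>d\<bar> \<le> int K} = int ` {1..K} \<union> (\<lambda>j. - int j) ` {1..K}"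
  proof (intro set_eqI iffI)
    fix d :: int assume "d \<in> {d::int. d \<noteq> 0 \<and> \<bar>d\<bar> \<le> int K}"
    then have "d \<noteq> 0" "\<bar>d\<bar> \<le> int K" by auto
    then show "d \<in> int ` {1..K} \<union> (\<lambda>j. - int j) ` {1..K}"
    proof (cases "d > 0")
      case True then show ?thesis using \<open>\<bar>d\<bar> \<le> int K\<close> by (auto intro!: image_eqI[of _ _ "nat d"])
    next
      case False then show ?thesis using \<open>\<bar>d\<bar> \<le> int K\<close> \<open>d \<noteq> 0\<close> by (auto intro!: image_eqI[of _ _ "nat (- d)"])
    qed
  qed auto
  have "(\<Sum>d\<in>{d::int. d \<noteq> 0 \<and> \<bar>d\<bar> \<le> int K}. 1 / real_of_int \<bar>d\<bar>)
      = (\<Sum>d\<in>int ` {1..K}. 1 / real_of_int \<bar>d\<bar>) + (\<Sum>d\<in>(\<lambda>j. - int j) ` {1..K}. 1 / real_of_int \<bar>d\<bar>)"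
    unfolding eq by (rule sum.union_disjoint) auto
  also have "\<dots> = (\<Sum>j\<in>{1..K}. 1 / real j) + (\<Sum>j\<in>{1..K}. 1 / real j)"
    by (simp add: sum.reindex inj_on_def)
  also have "\<dots> \<le> 2 * (1 + ln (real K))" using harm_bound[OF K] by simp
  finally show ?thesis .
qed

lemma W_bound:
  fixes N :: real assumes N: "N \<ge> 1"
  defines "S \<equiv> {n::int. \<bar>real_of_int n\<bar> \<le> 2 * N}"
  shows "(\<Sum>p\<in>{p\<in>S\<times>S. fst p + snd p = m \<and> fst p \<noteq> snd p}. 1 / real_of_int \<bar>fst p - snd p\<bar>) \<le> 2 * (1 + ln (4 * N))"
proof -
  define K where "K = nat \<lfloor>4 * N\<rfloor>"
  have K1: "K \<ge> 1" using N by (simp add: K_def le_nat_iff le_floor_iff)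
  have KN: "real K \<le> 4 * N" using N by (simp add: K_def)
  define P where "P = {p\<in>S\<times>S. fst p + snd p = m \<and> fst p \<noteq> snd p}"
  have inj: "inj_on (\<lambda>p. fst p - snd p) P"
    by (auto simp: inj_on_def P_def prod_eq_iff)
  have sub: "(\<lambda>p. fst p - snd p) ` P \<subseteq> {d::int. d \<noteq> 0 \<and> \<bar>d\<bar> \<le> int K}"
  proof safe
    fix p1 p2 assume "(p1, p2) \<in> P"
    then have "\<bar>real_of_int p1\<bar> \<le> 2 * N" "\<bar>real_of_int p2\<bar> \<le> 2 * N" "p1 \<noteq> p2" by (auto simp: P_def S_def)
    then have "real_of_int \<bar>p1 - p2\<bar> \<le> 4 * N" by linarith
    then have "\<bar>p1 - p2\<bar> \<le> \<lfloor>4 * N\<rfloor>" by (simp add: le_floor_iff)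
    then show "\<bar>fst (p1, p2) - snd (p1, p2)\<bar> \<le> int K" using N by (simp add: K_def)
    show "fst (p1, p2) - snd (p1, p2) = 0 \<Longrightarrow> False" using \<open>p1 \<noteq> p2\<close> by simp
  qed
  have finK: "finite {d::int. d \<noteq> 0 \<and> \<bar>d\<bar> \<le> int K}"
    by (rule finite_subset[of _ "{- int K..int K}"]) auto
  have "(\<Sum>p\<in>P. 1 / real_of_int \<bar>fst p - snd p\<bar>) = (\<Sum>d\<in>(\<lambda>p. fst p - snd p) ` P. 1 / real_of_int \<bar>d\<bar>)"
    by (simp add: sum.reindex[OF inj])
  also have "\<dots> \<le> (\<Sum>d\<in>{d::int. d \<noteq> 0 \<and> \<bar>d\<bar> \<le> int K}. 1 / real_of_int \<bar>d\<bar>)"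
    by (rule sum_mono2[OF finK sub]) simp
  also have "\<dots> \<le> 2 * (1 + ln (real K))" by (rule harm_int[OF K1])
  also have "\<dots> \<le> 2 * (1 + ln (4 * N))" using K1 KN by simp
  finally show ?thesis by (simp add: P_def)
qed


lemma shift_integral:
  fixes Q :: "real \<Rightarrow> ennreal" and D :: real
  assumes [measurable]: "Q \<in> borel_measurable borel" and D: "D \<noteq> 0"
  shows "(\<integral>\<^sup>+t. Q (x + t * D) \<partial>lborel) = ennreal (1 / \<bar>D\<bar>) * (\<integral>\<^sup>+y. Q y \<partial>lborel)"
proof -
  have "(\<integral>\<^sup>+y. Q y \<partial>lborel) = ennreal \<bar>D\<bar> * (\<integral>\<^sup>+t. Q (x + D * t) \<partial>lborel)"
    by (rule nn_integral_real_affine[OF _ D]) simp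
  then have "ennreal (1 / \<bar>D\<bar>) * (\<integral>\<^sup>+y. Q y \<partial>lborel) = (ennreal (1 / \<bar>D\<bar>) * ennreal \<bar>D\<bar>) * (\<integral>\<^sup>+t. Q (x + D * t) \<partial>lborel)"
    by (simp add: mult.assoc)
  also have "ennreal (1 / \<bar>D\<bar>) * ennreal \<bar>D\<bar> = 1" using D by (simp add: ennreal_mult[symmetric])
  finally show ?thesis by (simp add: mult.commute)
qed

lemma bilinear:
  fixes P Q :: "real \<Rightarrow> ennreal" and c :: real and n1 n2 :: int
  assumes [measurable]: "P \<in> borel_measurable borel" "Q \<in> borel_measurable borel"
    and c: "c > 0" and n: "n1 \<noteq> n2"
  shows "(\<integral>\<^sup>+t. indicator {0..1} t * (\<integral>\<^sup>+x. P (x - c * t * of_int n1) * Q (x - c * t * of_int n2) \<partial>lborel) \<partial>lborel)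
     \<le> ennreal (1 / (c * \<bar>of_int n1 - of_int n2\<bar>)) * (\<integral>\<^sup>+x. P x \<partial>lborel) * (\<integral>\<^sup>+x. Q x \<partial>lborel)"
proof -
  define D where "D = c * (of_int n1 - of_int n2)"
  have D: "D \<noteq> 0" using c n by (simp add: D_def)
  have inner: "(\<integral>\<^sup>+x. P (x - c * t * of_int n1) * Q (x - c * t * of_int n2) \<partial>lborel)
      = (\<integral>\<^sup>+x. P x * Q (x + t * D) \<partial>lborel)" for t
  proof -
    have "(\<integral>\<^sup>+x. P (x - c * t * of_int n1) * Q (x - c * t * of_int n2) \<partial>lborel)
        = ennreal \<bar>1::real\<bar> * (\<integral>\<^sup>+x. P ((c * t * of_int n1 + 1 * x) - c * t * of_int n1) * Q ((c * t * of_int n1 + 1 * x) - c * t * of_int n2) \<partial>lborel)"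
      by (rule nn_integral_real_affine) auto
    also have "\<dots> = (\<integral>\<^sup>+x. P x * Q (x + t * D) \<partial>lborel)"
      by (simp add: D_def algebra_simps)
    finally show ?thesis .
  qed
  have "(\<integral>\<^sup>+t. indicator {0..1} t * (\<integral>\<^sup>+x. P (x - c * t * of_int n1) * Q (x - c * t * of_int n2) \<partial>lborel) \<partial>lborel)
      = (\<integral>\<^sup>+t. (\<integral>\<^sup>+x. indicator {0..1} t * (P x * Q (x + t * D)) \<partial>lborel) \<partial>lborel)"
    unfolding inner by (intro nn_integral_cong) (simp add: nn_integral_cmult)
  also have "\<dots> = (\<integral>\<^sup>+x. (\<integral>\<^sup>+t. indicator {0..1} t * (P x * Q (x + t * D)) \<partial>lborel) \<partial>lborel)"
    by (rule lborel_pair.Fubini') measurable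
  also have "\<dots> = (\<integral>\<^sup>+x. P x * (\<integral>\<^sup>+t. indicator {0..1} t * Q (x + t * D) \<partial>lborel) \<partial>lborel)"
    by (intro nn_integral_cong) (simp add: nn_integral_cmult[symmetric] ac_simps)
  also have "\<dots> \<le> (\<integral>\<^sup>+x. P x * (ennreal (1 / \<bar>D\<bar>) * (\<integral>\<^sup>+y. Q y \<partial>lborel)) \<partial>lborel)"
  proof (intro nn_integral_mono mult_left_mono)
    fix x
    have "(\<integral>\<^sup>+t. indicator {0..1} t * Q (x + t * D) \<partial>lborel) \<le> (\<integral>\<^sup>+t. Q (x + t * D) \<partial>lborel)"
      by (intro nn_integral_mono) (simp add: indicator_def)
    then show "(\<integral>\<^sup>+t. indicator {0..1} t * Q (x + t * D) \<partial>lborel) \<le> ennreal (1 / \<bar>D\<bar>) * (\<integral>\<^sup>+y. Q y \<partial>lborel)"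
      by (simp add: shift_integral[OF _ D])
  qed simp
  also have "\<dots> = ennreal (1 / \<bar>D\<bar>) * (\<integral>\<^sup>+x. P x \<partial>lborel) * (\<integral>\<^sup>+y. Q y \<partial>lborel)"
    by (simp add: nn_integral_multc ac_simps)
  finally show ?thesis using c by (simp add: D_def abs_mult)
qed


lemma shift0:
  fixes Q :: "real \<Rightarrow> ennreal"
  assumes [measurable]: "Q \<in> borel_measurable borel"
  shows "(\<integral>\<^sup>+x. Q (x - s) \<partial>lborel) = (\<integral>\<^sup>+x. Q x \<partial>lborel)"
proof -
  have "(\<integral>\<^sup>+x. Q (x - s) \<partial>lborel) = ennreal \<bar>1::real\<bar> * (\<integral>\<^sup>+x. Q ((s + 1 * x) - s) \<partial>lborel)"
    by (rule nn_integral_real_affine) auto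
  then show ?thesis by simp
qed

lemma assemble:
  fixes h :: "int \<Rightarrow> real \<Rightarrow> complex" and S :: "int set" and c W :: real
    and M Q :: "int \<Rightarrow> real"
  assumes S: "finite S" and c: "c > 0" and W0: "W \<ge> 0"
    and hm[measurable]: "\<And>n. h n \<in> borel_measurable borel"
    and L2: "\<And>n. n \<in> S \<Longrightarrow> (\<integral>\<^sup>+x. ennreal ((cmod (h n x))\<^sup>2) \<partial>lborel) \<le> ennreal (M n)"
    and L4: "\<And>n. n \<in> S \<Longrightarrow> (\<integral>\<^sup>+x. ennreal ((cmod (h n x))^4) \<partial>lborel) \<le> ennreal (Q n)"
    and M0: "\<And>n. M n \<ge> 0" and Q0: "\<And>n. Q n \<ge> 0"
    and W: "\<And>m. (\<Sum>p\<in>{p\<in>S\<times>S. fst p + snd p = m \<and> fst p \<noteq> snd p}. 1 / real_of_int \<bar>fst p - snd p\<bar>) \<le> W"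
  shows "(\<integral>\<^sup>+t. indicator {0..1} t * (\<integral>\<^sup>+x. (\<integral>\<^sup>+y. indicator {0..<1} y *
            ennreal ((cmod (\<Sum>n\<in>S. ce (of_int n * y) * h n (x - c * t * of_int n)))^4) \<partial>lborel) \<partial>lborel) \<partial>lborel)
     \<le> ennreal (2 * (\<Sum>n\<in>S. Q n) + (2 * W / c) * (\<Sum>p\<in>{p\<in>S\<times>S. fst p \<noteq> snd p}. M (fst p) * M (snd p)))"
proof -
  define Pr where "Pr = {p\<in>S\<times>S. fst p \<noteq> snd p}"
  have Pr: "finite Pr" using S by (auto simp: Pr_def intro: finite_subset[of _ "S\<times>S"])
  define wt where "wt p = 2 * W * real_of_int \<bar>fst p - snd p\<bar>" for p :: "int \<times> int"
  define I where "I p t = (\<integral>\<^sup>+x. ennreal ((cmod (h (fst p) (x - c * t * of_int (fst p))))\<^sup>2) *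
                                ennreal ((cmod (h (snd p) (x - c * t * of_int (snd p))))\<^sup>2) \<partial>lborel)" for p t
  have Im[measurable]: "I p \<in> borel_measurable borel" for p
    unfolding I_def by measurable
  have step1: "(\<integral>\<^sup>+y. indicator {0..<1} y *
            ennreal ((cmod (\<Sum>n\<in>S. ce (of_int n * y) * h n (x - c * t * of_int n)))^4) \<partial>lborel)
       \<le> (\<Sum>n\<in>S. 2 * ennreal ((cmod (h n (x - c * t * of_int n)))^4))
          + (\<Sum>p\<in>Pr. ennreal (wt p) * (ennreal ((cmod (h (fst p) (x - c * t * of_int (fst p))))\<^sup>2) *
                                ennreal ((cmod (h (snd p) (x - c * t * of_int (snd p))))\<^sup>2)))" for t x
  proof -
    let ?a = "\<lambda>n. h n (x - c * t * of_int n)"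
    have "(\<integral>\<^sup>+y. indicator {0..<1} y * ennreal ((cmod (\<Sum>n\<in>S. ce (of_int n * y) * ?a n))^4) \<partial>lborel)
       \<le> ennreal (2 * (\<Sum>n\<in>S. (cmod (?a n))^4) + 2 * W * (\<Sum>p\<in>{p\<in>S\<times>S. fst p \<noteq> snd p}. real_of_int \<bar>fst p - snd p\<bar> * (cmod (?a (fst p)))\<^sup>2 * (cmod (?a (snd p)))\<^sup>2))"
      by (rule quartic[OF S W])
    also have "\<dots> = (\<Sum>n\<in>S. 2 * ennreal ((cmod (?a n))^4))
          + (\<Sum>p\<in>Pr. ennreal (wt p) * (ennreal ((cmod (?a (fst p)))\<^sup>2) * ennreal ((cmod (?a (snd p)))\<^sup>2)))"
    proof -
      define r where "r n = (cmod (?a n))^4" for n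
      define s where "s p = (cmod (?a (fst p)))\<^sup>2 * (cmod (?a (snd p)))\<^sup>2" for p :: "int \<times> int"
      have r0: "r n \<ge> 0" for n by (simp add: r_def)
      have s0: "s p \<ge> 0" for p by (simp add: s_def)
      have wt0: "wt p \<ge> 0" for p using W0 by (simp add: wt_def)
      have e1: "2 * (\<Sum>n\<in>S. r n) = (\<Sum>n\<in>S. 2 * r n)" by (simp add: sum_distrib_left)
      have e2: "2 * W * (\<Sum>p\<in>Pr. real_of_int \<bar>fst p - snd p\<bar> * (cmod (?a (fst p)))\<^sup>2 * (cmod (?a (snd p)))\<^sup>2)
          = (\<Sum>p\<in>Pr. wt p * s p)" by (simp add: sum_distrib_left wt_def s_def mult.assoc)
      have "ennreal (2 * (\<Sum>n\<in>S. r n) + (\<Sum>p\<in>Pr. wt p * s p))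
          = ennreal (\<Sum>n\<in>S. 2 * r n) + ennreal (\<Sum>p\<in>Pr. wt p * s p)"
        by (subst e1, rule ennreal_plus) (auto intro!: sum_nonneg simp: r0 s0 wt0)
      also have "\<dots> = (\<Sum>n\<in>S. ennreal (2 * r n)) + (\<Sum>p\<in>Pr. ennreal (wt p * s p))"
        by (simp add: sum_ennreal r0 s0 wt0)
      also have "\<dots> = (\<Sum>n\<in>S. 2 * ennreal (r n)) + (\<Sum>p\<in>Pr. ennreal (wt p) * (ennreal ((cmod (?a (fst p)))\<^sup>2) * ennreal ((cmod (?a (snd p)))\<^sup>2)))"
        by (simp add: ennreal_mult r0 wt0 s_def)
      finally show ?thesis unfolding r_def Pr_def e2[unfolded Pr_def] .
    qed
    finally show ?thesis .
  qed
  have step2: "(\<integral>\<^sup>+x. (\<integral>\<^sup>+y. indicator {0..<1} y *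
            ennreal ((cmod (\<Sum>n\<in>S. ce (of_int n * y) * h n (x - c * t * of_int n)))^4) \<partial>lborel) \<partial>lborel)
      \<le> ennreal (2 * (\<Sum>n\<in>S. Q n)) + (\<Sum>p\<in>Pr. ennreal (wt p) * I p t)" for t
  proof -
    have "(\<integral>\<^sup>+x. (\<integral>\<^sup>+y. indicator {0..<1} y *
            ennreal ((cmod (\<Sum>n\<in>S. ce (of_int n * y) * h n (x - c * t * of_int n)))^4) \<partial>lborel) \<partial>lborel)
        \<le> (\<integral>\<^sup>+x. (\<Sum>n\<in>S. 2 * ennreal ((cmod (h n (x - c * t * of_int n)))^4))
          + (\<Sum>p\<in>Pr. ennreal (wt p) * (ennreal ((cmod (h (fst p) (x - c * t * of_int (fst p))))\<^sup>2) *
                                ennreal ((cmod (h (snd p) (x - c * t * of_int (snd p))))\<^sup>2))) \<partial>lborel)"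
      by (intro nn_integral_mono step1)
    also have "\<dots> = (\<Sum>n\<in>S. 2 * (\<integral>\<^sup>+x. ennreal ((cmod (h n (x - c * t * of_int n)))^4) \<partial>lborel))
                  + (\<Sum>p\<in>Pr. ennreal (wt p) * I p t)"
      by (simp add: nn_integral_add nn_integral_sum nn_integral_cmult I_def)
    also have "\<dots> \<le> (\<Sum>n\<in>S. 2 * ennreal (Q n)) + (\<Sum>p\<in>Pr. ennreal (wt p) * I p t)"
    proof (intro add_mono sum_mono mult_left_mono order.refl)
      fix n assume "n \<in> S"
      have "(\<integral>\<^sup>+x. ennreal ((cmod (h n (x - c * t * of_int n)))^4) \<partial>lborel) = (\<integral>\<^sup>+x. ennreal ((cmod (h n x))^4) \<partial>lborel)"
        by (rule shift0[where Q="\<lambda>x. ennreal ((cmod (h n x))^4)"]) measurable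
      then show "(\<integral>\<^sup>+x. ennreal ((cmod (h n (x - c * t * of_int n)))^4) \<partial>lborel) \<le> ennreal (Q n)"
        using L4[OF \<open>n \<in> S\<close>] by simp
    qed auto
    also have "(\<Sum>n\<in>S. 2 * ennreal (Q n)) = ennreal (2 * (\<Sum>n\<in>S. Q n))"
    proof -
      have "(\<Sum>n\<in>S. 2 * ennreal (Q n)) = (\<Sum>n\<in>S. ennreal (2 * Q n))" by (simp add: ennreal_mult Q0)
      also have "\<dots> = ennreal (\<Sum>n\<in>S. 2 * Q n)" by (rule sum_ennreal) (simp add: Q0)
      finally show ?thesis by (simp add: sum_distrib_left)
    qed
    finally show ?thesis .
  qed
  have "(\<integral>\<^sup>+t. indicator {0..1} t * (\<integral>\<^sup>+x. (\<integral>\<^sup>+y. indicator {0..<1} y *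
            ennreal ((cmod (\<Sum>n\<in>S. ce (of_int n * y) * h n (x - c * t * of_int n)))^4) \<partial>lborel) \<partial>lborel) \<partial>lborel)
      \<le> (\<integral>\<^sup>+t. indicator {0..1} t * (ennreal (2 * (\<Sum>n\<in>S. Q n)) + (\<Sum>p\<in>Pr. ennreal (wt p) * I p t)) \<partial>lborel)"
    by (intro nn_integral_mono mult_left_mono step2) simp
  also have "\<dots> = ennreal (2 * (\<Sum>n\<in>S. Q n))
       + (\<Sum>p\<in>Pr. ennreal (wt p) * (\<integral>\<^sup>+t. indicator {0..1} t * I p t \<partial>lborel))"
    by (simp add: distrib_left sum_distrib_left nn_integral_add nn_integral_sum nn_integral_cmult nn_integral_multc ac_simps)
  also have "\<dots> \<le> ennreal (2 * (\<Sum>n\<in>S. Q n))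
       + (\<Sum>p\<in>Pr. ennreal (wt p) * (ennreal (1 / (c * \<bar>of_int (fst p) - of_int (snd p)\<bar>)) * ennreal (M (fst p)) * ennreal (M (snd p))))"
  proof (intro add_mono sum_mono mult_left_mono)
    fix p assume p: "p \<in> Pr"
    then have "fst p \<noteq> snd p" "fst p \<in> S" "snd p \<in> S" by (auto simp: Pr_def)
    have "(\<integral>\<^sup>+t. indicator {0..1} t * I p t \<partial>lborel)
        \<le> ennreal (1 / (c * \<bar>of_int (fst p) - of_int (snd p)\<bar>)) * (\<integral>\<^sup>+x. ennreal ((cmod (h (fst p) x))\<^sup>2) \<partial>lborel)
           * (\<integral>\<^sup>+x. ennreal ((cmod (h (snd p) x))\<^sup>2) \<partial>lborel)"
      unfolding I_def by (rule bilinear[OF _ _ c \<open>fst p \<noteq> snd p\<close>]) measurable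
    also have "\<dots> \<le> ennreal (1 / (c * \<bar>of_int (fst p) - of_int (snd p)\<bar>)) * ennreal (M (fst p)) * ennreal (M (snd p))"
      by (intro mult_mono L2 \<open>fst p \<in> S\<close> \<open>snd p \<in> S\<close> order.refl) auto
    finally show "(\<integral>\<^sup>+t. indicator {0..1} t * I p t \<partial>lborel)
        \<le> ennreal (1 / (c * \<bar>of_int (fst p) - of_int (snd p)\<bar>)) * ennreal (M (fst p)) * ennreal (M (snd p))" .
  qed auto
  also have "\<dots> = ennreal (2 * (\<Sum>n\<in>S. Q n) + (2 * W / c) * (\<Sum>p\<in>Pr. M (fst p) * M (snd p)))"
  proof -
    have "ennreal (wt p) * (ennreal (1 / (c * \<bar>of_int (fst p) - of_int (snd p)\<bar>)) * ennreal (M (fst p)) * ennreal (M (snd p)))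
        = ennreal ((2 * W / c) * (M (fst p) * M (snd p)))" if "p \<in> Pr" for p
    proof -
      have d: "real_of_int \<bar>fst p - snd p\<bar> > 0" using that by (auto simp: Pr_def)
      have "wt p * (1 / (c * \<bar>of_int (fst p) - of_int (snd p)\<bar>)) = 2 * W / c"
        using d c by (simp add: wt_def field_simps)
      then show ?thesis using W0 c M0 d
        by (simp add: ennreal_mult[symmetric] mult.assoc[symmetric] wt_def)
    qed
    then have "(\<Sum>p\<in>Pr. ennreal (wt p) * (ennreal (1 / (c * \<bar>of_int (fst p) - of_int (snd p)\<bar>)) * ennreal (M (fst p)) * ennreal (M (snd p))))
        = (\<Sum>p\<in>Pr. ennreal ((2 * W / c) * (M (fst p) * M (snd p))))" by (rule sum.cong[OF refl])
    also have "\<dots> = ennreal ((2 * W / c) * (\<Sum>p\<in>Pr. M (fst p) * M (snd p)))"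
      using W0 c M0 by (simp add: sum_ennreal sum_distrib_left)
    finally show ?thesis using W0 c M0 Q0
      by (simp add: ennreal_plus[symmetric] sum_nonneg del: ennreal_plus)
  qed
  finally show ?thesis by (simp add: Pr_def)
qed


lemma L4_decomp:
  fixes U :: "real \<Rightarrow> real \<Rightarrow> real \<Rightarrow> complex"
  assumes Um[measurable]: "(\<lambda>w. U (fst w) (fst (snd w)) (snd (snd w))) \<in> borel_measurable (lborel \<Otimes>\<^sub>M (lborel \<Otimes>\<^sub>M lborel))"
  shows "L4_pow4_TRT U = (\<integral>\<^sup>+t. indicator {0..1} t * (\<integral>\<^sup>+x. (\<integral>\<^sup>+y. indicator {0..<1} y *
            ennreal ((cmod (U t x y))^4) \<partial>lborel) \<partial>lborel) \<partial>lborel)"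
proof -
  define F where "F w = indicator {0..1::real} (fst w) * indicator {0..<1::real} (snd (snd w)) *
       ennreal ((cmod (U (fst w) (fst (snd w)) (snd (snd w))))^4)" for w :: "real \<times> real \<times> real"
  have Fm[measurable]: "F \<in> borel_measurable (lborel \<Otimes>\<^sub>M (lborel \<Otimes>\<^sub>M lborel))"
    unfolding F_def by measurable
  have "L4_pow4_TRT U = (\<integral>\<^sup>+w. F w \<partial>lebesgue)"
    unfolding L4_pow4_TRT_def F_def by (intro nn_integral_cong) (auto simp: indicator_def)
  also have "\<dots> = (\<integral>\<^sup>+w. F w \<partial>lborel)" by (rule nn_integral_completion)
  also have "\<dots> = (\<integral>\<^sup>+w. F w \<partial>(lborel \<Otimes>\<^sub>M (lborel \<Otimes>\<^sub>M lborel)))" by (simp only: lborel_prod)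
  also have "\<dots> = (\<integral>\<^sup>+t. (\<integral>\<^sup>+v. F (t, v) \<partial>(lborel \<Otimes>\<^sub>M lborel)) \<partial>lborel)"
    by (rule lborel_pair.nn_integral_fst[symmetric]) (rule Fm)
  also have "\<dots> = (\<integral>\<^sup>+t. (\<integral>\<^sup>+x. (\<integral>\<^sup>+y. F (t, x, y) \<partial>lborel) \<partial>lborel) \<partial>lborel)"
  proof (intro nn_integral_cong)
    fix t
    have mt: "(\<lambda>v. F (t, v)) \<in> borel_measurable (lborel \<Otimes>\<^sub>M lborel)" by measurable
    show "(\<integral>\<^sup>+v. F (t, v) \<partial>(lborel \<Otimes>\<^sub>M lborel)) = (\<integral>\<^sup>+x. (\<integral>\<^sup>+y. F (t, x, y) \<partial>lborel) \<partial>lborel)"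
      using lborel.nn_integral_fst[OF mt] by simp
  qed
  also have "\<dots> = (\<integral>\<^sup>+t. indicator {0..1} t * (\<integral>\<^sup>+x. (\<integral>\<^sup>+y. indicator {0..<1} y *
            ennreal ((cmod (U t x y))^4) \<partial>lborel) \<partial>lborel) \<partial>lborel)"
  proof (intro nn_integral_cong)
    fix t :: real
    show "(\<integral>\<^sup>+x. (\<integral>\<^sup>+y. F (t, x, y) \<partial>lborel) \<partial>lborel) = indicator {0..1} t * (\<integral>\<^sup>+x. (\<integral>\<^sup>+y. indicator {0..<1} y *
            ennreal ((cmod (U t x y))^4) \<partial>lborel) \<partial>lborel)"
      by (cases "t \<in> {0..1}") (simp_all add: F_def)
  qed
  finally show ?thesis .
qed


lemma phi_bound:
  fixes \<phi> :: "real \<Rightarrow> real"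
  assumes sm: "smooth_fun \<phi>" and z: "\<And>x. \<bar>x\<bar> \<ge> 2 \<Longrightarrow> \<phi> x = 0"
  shows "continuous_on UNIV \<phi>" "\<exists>B\<ge>1. \<forall>x. \<bar>\<phi> x\<bar> \<le> B"
proof -
  have "\<phi> differentiable (at x)" for x using sm unfolding smooth_fun_def by (metis funpow_0)
  then show cont: "continuous_on UNIV \<phi>"
    by (intro continuous_at_imp_continuous_on ballI differentiable_imp_continuous_within)
  have "compact (\<phi> ` {-2..2})" by (intro compact_continuous_image continuous_on_subset[OF cont]) auto
  then obtain B0 where B0: "\<And>y. y \<in> \<phi> ` {-2..2} \<Longrightarrow> norm y \<le> B0"
    using compact_imp_bounded bounded_iff by metis
  show "\<exists>B\<ge>1. \<forall>x. \<bar>\<phi> x\<bar> \<le> B"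
  proof (intro exI[of _ "max 1 B0"] conjI allI)
    fix x
    show "\<bar>\<phi> x\<bar> \<le> max 1 B0"
    proof (cases "x \<in> {-2..2}")
      case True then show ?thesis using B0[of "\<phi> x"] by auto
    next
      case False then have "\<bar>x\<bar> \<ge> 2" by auto
      then show ?thesis using z by simp
    qed
  qed simp
qed

lemma complex_borel_version:
  fixes h :: "real \<Rightarrow> complex"
  assumes [measurable]: "h \<in> borel_measurable lebesgue"
  shows "\<exists>h'. h' \<in> borel_measurable borel \<and> (AE x in lborel. h x = h' x)"
proof -
  have "(\<lambda>x. Re (h x)) \<in> borel_measurable (completion lborel)" "(\<lambda>x. Im (h x)) \<in> borel_measurable (completion lborel)"
    by measurable
  then obtain r i where r: "r \<in> borel_measurable lborel" "AE x in lborel. Re (h x) = r x"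
    and i: "i \<in> borel_measurable lborel" "AE x in lborel. Im (h x) = i x"
    using completion_ex_borel_measurable_real by metis
  have [measurable]: "r \<in> borel_measurable borel" "i \<in> borel_measurable borel" using r i by auto
  show ?thesis
  proof (intro exI conjI)
    show "(\<lambda>x. Complex (r x) (i x)) \<in> borel_measurable borel"
      unfolding Complex_eq by measurable
    show "AE x in lborel. h x = Complex (r x) (i x)"
      using r(2) i(2) by eventually_elim (simp add: complex_eq_iff)
  qed
qed

lemma schrod_rewrite:
  fixes \<phi> :: "real \<Rightarrow> real" and N :: real and g :: "real \<Rightarrow> int \<Rightarrow> complex" and gb :: "int \<Rightarrow> real \<Rightarrow> complex"
  assumes \<phi>m[measurable]: "\<phi> \<in> borel_measurable borel"
    and gm[measurable]: "\<And>n. (\<lambda>\<xi>. g \<xi> n) \<in> borel_measurable lebesgue"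
    and gbm[measurable]: "\<And>n. gb n \<in> borel_measurable borel"
    and ae: "\<And>n. AE \<xi> in lborel. g \<xi> n = gb n \<xi>"
  shows "schrod_PN \<phi> N g t x y = (\<Sum>n\<in>{n::int. \<bar>real_of_int n\<bar> \<le> 2*N}. ce (of_int n * y) *
           (LINT \<xi>|lborel. ce (\<xi> * (x - 2*pi*t* of_int n)) * (complex_of_real (\<phi> (\<xi>/N) * \<phi> (of_int n / N)) * gb n \<xi>)))"
  unfolding schrod_PN_def
proof (intro sum.cong refl)
  fix n :: int
  define E1 where "E1 \<xi> = exp ((2 * pi * \<i>) * complex_of_real (\<xi> * x + real_of_int n * y)) *
           exp (- (4 * pi\<^sup>2 * \<i>) * complex_of_real (t * \<xi> * real_of_int n)) *
           complex_of_real (\<phi> (\<xi> / N) * \<phi> (real_of_int n / N))" for \<xi>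
  have E1m[measurable]: "E1 \<in> borel_measurable borel"
    unfolding E1_def by measurable
  have E1l[measurable]: "E1 \<in> borel_measurable lebesgue" by (rule measurable_completion) simp
  have "(LINT \<xi>|lebesgue. E1 \<xi> * g \<xi> n) = (LINT \<xi>|lebesgue. E1 \<xi> * gb n \<xi>)"
  proof (rule integral_cong_AE)
    show "AE \<xi> in lebesgue. E1 \<xi> * g \<xi> n = E1 \<xi> * gb n \<xi>"
      using AE_completion[OF ae[of n]] by eventually_elim simp
    show "(\<lambda>\<xi>. E1 \<xi> * gb n \<xi>) \<in> borel_measurable lebesgue"
      by (rule measurable_completion) simp
    show "(\<lambda>\<xi>. E1 \<xi> * g \<xi> n) \<in> borel_measurable lebesgue"
      using E1l gm[of n] by (rule borel_measurable_times)
  qed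
  also have "\<dots> = (LINT \<xi>|lborel. E1 \<xi> * gb n \<xi>)"
    by (rule integral_completion) simp
  also have "\<dots> = (LINT \<xi>|lborel. ce (of_int n * y) * (ce (\<xi> * (x - 2*pi*t* of_int n)) * (complex_of_real (\<phi> (\<xi>/N) * \<phi> (of_int n / N)) * gb n \<xi>)))"
  proof (intro Bochner_Integration.integral_cong refl)
    fix \<xi>
    have "exp ((2 * pi * \<i>) * complex_of_real (\<xi> * x + real_of_int n * y)) *
           exp (- (4 * pi\<^sup>2 * \<i>) * complex_of_real (t * \<xi> * real_of_int n))
        = exp ((2 * pi * \<i>) * complex_of_real (\<xi> * x + real_of_int n * y) + (- (4 * pi\<^sup>2 * \<i>) * complex_of_real (t * \<xi> * real_of_int n)))"
      by (rule exp_add[symmetric])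
    also have "(2 * pi * \<i>) * complex_of_real (\<xi> * x + real_of_int n * y) + (- (4 * pi\<^sup>2 * \<i>) * complex_of_real (t * \<xi> * real_of_int n))
        = (2 * pi * \<i>) * complex_of_real (of_int n * y + \<xi> * (x - 2*pi*t* of_int n))"
      by (simp add: algebra_simps power2_eq_square)
    also have "exp ((2 * pi * \<i>) * complex_of_real (of_int n * y + \<xi> * (x - 2*pi*t* of_int n))) = ce (of_int n * y + \<xi> * (x - 2*pi*t* of_int n))"
      by (simp only: ce_def)
    also have "\<dots> = ce (of_int n * y) * ce (\<xi> * (x - 2*pi*t* of_int n))" by (rule ce_add)
    finally have "exp ((2 * pi * \<i>) * complex_of_real (\<xi> * x + real_of_int n * y)) *
           exp (- (4 * pi\<^sup>2 * \<i>) * complex_of_real (t * \<xi> * real_of_int n))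
        = ce (of_int n * y) * ce (\<xi> * (x - 2*pi*t* of_int n))" .
    then show "E1 \<xi> * gb n \<xi> = ce (of_int n * y) * (ce (\<xi> * (x - 2*pi*t* of_int n)) * (complex_of_real (\<phi> (\<xi>/N) * \<phi> (of_int n / N)) * gb n \<xi>))"
      unfolding E1_def by (simp add: mult.assoc)
  qed
  also have "\<dots> = ce (of_int n * y) * (LINT \<xi>|lborel. ce (\<xi> * (x - 2*pi*t* of_int n)) * (complex_of_real (\<phi> (\<xi>/N) * \<phi> (of_int n / N)) * gb n \<xi>))"
    by (rule integral_mult_right_zero)
  finally show "(LINT \<xi>|lebesgue. exp ((2 * pi * \<i>) * complex_of_real (\<xi> * x + real_of_int n * y)) *
           exp (- (4 * pi\<^sup>2 * \<i>) * complex_of_real (t * \<xi> * real_of_int n)) *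
           complex_of_real (\<phi> (\<xi> / N) * \<phi> (real_of_int n / N)) * g \<xi> n)
      = ce (of_int n * y) * (LINT \<xi>|lborel. ce (\<xi> * (x - 2*pi*t* of_int n)) * (complex_of_real (\<phi> (\<xi>/N) * \<phi> (of_int n / N)) * gb n \<xi>))"
    by (simp only: E1_def)
qed


lemma per_n:
  fixes G :: "real \<Rightarrow> complex" and K M2 :: real
  assumes K: "K > 0" and G[measurable]: "G \<in> borel_measurable borel"
    and supp: "\<And>\<xi>. \<xi> \<notin> {-K..K} \<Longrightarrow> G \<xi> = 0"
    and GM: "(\<integral>\<^sup>+\<xi>. ennreal ((cmod (G \<xi>))\<^sup>2) \<partial>lborel) \<le> ennreal M2" and M2: "M2 \<ge> 0"
  shows "(\<lambda>x. LINT \<xi>|lborel. ce (\<xi> * x) * G \<xi>) \<in> borel_measurable borel"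
    and "(\<integral>\<^sup>+x. ennreal ((cmod (LINT \<xi>|lborel. ce (\<xi> * x) * G \<xi>))\<^sup>2) \<partial>lborel) \<le> ennreal M2"
    and "(\<integral>\<^sup>+x. ennreal ((cmod (LINT \<xi>|lborel. ce (\<xi> * x) * G \<xi>))^4) \<partial>lborel) \<le> ennreal (2 * K * M2\<^sup>2)"
proof -
  define h where "h x = (LINT \<xi>|lborel. ce (\<xi> * x) * G \<xi>)" for x
  have fin: "(\<integral>\<^sup>+\<xi>. (cmod (G \<xi>))\<^sup>2 \<partial>lborel) < \<infinity>" using GM by (simp add: le_less_trans)
  note P = plancherel_1d[OF K G supp fin]
  show hm: "(\<lambda>x. LINT \<xi>|lborel. ce (\<xi> * x) * G \<xi>) \<in> borel_measurable borel" by (rule P(1))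
  have hm'[measurable]: "h \<in> borel_measurable borel" using hm by (simp add: h_def[abs_def])
  show L2: "(\<integral>\<^sup>+x. ennreal ((cmod (LINT \<xi>|lborel. ce (\<xi> * x) * G \<xi>))\<^sup>2) \<partial>lborel) \<le> ennreal M2"
    using P(3) GM by (rule order_trans)
  have iG2: "integrable lborel (\<lambda>\<xi>. (cmod (G \<xi>))\<^sup>2)" by (rule sq_integrable) (use fin in auto)
  have "ennreal (LINT \<xi>|lborel. (cmod (G \<xi>))\<^sup>2) = (\<integral>\<^sup>+\<xi>. ennreal ((cmod (G \<xi>))\<^sup>2) \<partial>lborel)"
    using iG2 by (simp add: nn_integral_eq_integral)
  also have "\<dots> \<le> ennreal M2" by (rule GM)
  finally have IM: "(LINT \<xi>|lborel. (cmod (G \<xi>))\<^sup>2) \<le> M2" using M2 by simp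
  have sup: "(cmod (h x))\<^sup>2 \<le> 2 * K * M2" for x
    using P(2)[of x] IM K unfolding h_def by (smt (verit) mult_left_mono)
  have "(\<integral>\<^sup>+x. ennreal ((cmod (h x))^4) \<partial>lborel) \<le> (\<integral>\<^sup>+x. ennreal (2 * K * M2) * ennreal ((cmod (h x))\<^sup>2) \<partial>lborel)"
  proof (intro nn_integral_mono)
    fix x
    have "(cmod (h x))^4 = (cmod (h x))\<^sup>2 * (cmod (h x))\<^sup>2" by (simp add: power4_eq_xxxx power2_eq_square)
    also have "\<dots> \<le> (2 * K * M2) * (cmod (h x))\<^sup>2" by (intro mult_right_mono sup) simp
    finally show "ennreal ((cmod (h x))^4) \<le> ennreal (2 * K * M2) * ennreal ((cmod (h x))\<^sup>2)"
      using K M2 by (simp add: ennreal_mult[symmetric] ennreal_leI)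
  qed
  also have "\<dots> = ennreal (2 * K * M2) * (\<integral>\<^sup>+x. ennreal ((cmod (h x))\<^sup>2) \<partial>lborel)"
    by (rule nn_integral_cmult) measurable
  also have "\<dots> \<le> ennreal (2 * K * M2) * ennreal M2"
    using L2 by (intro mult_left_mono) (simp_all add: h_def)
  also have "\<dots> = ennreal (2 * K * M2\<^sup>2)" using K M2 by (simp add: ennreal_mult[symmetric] power2_eq_square mult.assoc)
  finally show "(\<integral>\<^sup>+x. ennreal ((cmod (LINT \<xi>|lborel. ce (\<xi> * x) * G \<xi>))^4) \<partial>lborel) \<le> ennreal (2 * K * M2\<^sup>2)"
    by (simp add: h_def)
qed

lemma powr_quarter_pow4: "(y::real) \<ge> 0 \<Longrightarrow> (y powr (1/4))^4 = y"
proof (cases "y = 0")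
  case False
  assume "y \<ge> 0"
  then have "y > 0" using False by simp
  have "(y powr (1/4))^4 = (y powr (1/4)) powr (real 4)"
  proof -
    have "y powr (1/4) > 0" using \<open>y > 0\<close> by simp
    then show ?thesis by (rule powr_realpow[symmetric])
  qed
  also have "\<dots> = y powr ((1/4) * real 4)" by (rule powr_powr)
  finally show ?thesis using \<open>y > 0\<close> by simp
qed simp

lemma pow4_sum_ge: "(a::real) \<ge> 0 \<Longrightarrow> b \<ge> 0 \<Longrightarrow> a^4 + b^4 \<le> (a + b)^4"
proof -
  assume a: "a \<ge> 0" and b: "b \<ge> 0"
  have "(a + b)^4 = a^4 + b^4 + (4*a^3*b + 6*a^2*b^2 + 4*a*b^3)"
    by (simp add: power4_eq_xxxx power3_eq_cube power2_eq_square algebra_simps)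
  moreover have "4*a^3*b + 6*a^2*b^2 + 4*a*b^3 \<ge> 0" using a b by simp
  ultimately show ?thesis by linarith
qed


theorem theorem1p8:
  fixes \<phi> :: "real \<Rightarrow> real"
  assumes "smooth_fun \<phi>"
    and "\<And>x. \<phi> (- x) = \<phi> x"
    and "\<And>x. \<bar>x\<bar> \<le> 1 \<Longrightarrow> \<phi> x = 1"
    and "\<And>x. \<bar>x\<bar> \<ge> 2 \<Longrightarrow> \<phi> x = 0"
  shows "\<exists>C::real. \<forall>(N::real) f g. N \<ge> 1 \<longrightarrow> in_L2_RT f \<longrightarrow> is_L2_fourier f g \<longrightarrow>
           L4_pow4_TRT (schrod_PN \<phi> N g) \<le>
           ennreal ((C * (ln N powr (1/4) * L2_norm_RT f + N powr (1/4) * l4L2_norm g)) ^ 4)"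
proof -
  note sm = assms(1) and z = assms(4)
  have \<phi>c: "continuous_on UNIV \<phi>" by (rule phi_bound(1)[OF sm z])
  obtain B where B1: "B \<ge> 1" and Bb: "\<And>x. \<bar>\<phi> x\<bar> \<le> B" using phi_bound(2)[OF sm z] by blast
  have \<phi>m[measurable]: "\<phi> \<in> borel_measurable borel" using \<phi>c by (rule borel_measurable_continuous_onI)
  define K2 where "K2 = B^8 * (8 + 10 * (1 + ln 4) / pi)"
  define K1 where "K1 = 8 * B^8 / pi"
  have K1: "K1 \<ge> 0" and K2: "K2 \<ge> 0" using B1 by (simp_all add: K1_def K2_def)
  show ?thesis
  proof (intro exI[of _ "(K1 + K2) powr (1/4)"] allI impI)
    fix N :: real and f g
    assume N: "N \<ge> 1" and f: "in_L2_RT f" and g: "is_L2_fourier f g"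
    define S where "S = {n::int. \<bar>real_of_int n\<bar> \<le> 2 * N}"
    have Ssub: "S \<subseteq> {- \<lfloor>2*N\<rfloor> .. \<lfloor>2*N\<rfloor>}"
    proof
      fix n assume "n \<in> S"
      then have "real_of_int n \<le> 2*N" "real_of_int (- n) \<le> 2*N" by (auto simp: S_def abs_le_iff)
      then have "n \<le> \<lfloor>2*N\<rfloor>" "- n \<le> \<lfloor>2*N\<rfloor>" by (simp_all only: le_floor_iff)
      then show "n \<in> {- \<lfloor>2*N\<rfloor> .. \<lfloor>2*N\<rfloor>}" by auto
    qed
    have Sfin: "finite S" using Ssub by (rule finite_subset) simp
    have cardS: "real (card S) \<le> 5 * N"
    proof -
      have "card S \<le> card {- \<lfloor>2*N\<rfloor> .. \<lfloor>2*N\<rfloor>}" using Ssub by (rule card_mono[rotated]) simp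
      also have "\<dots> = nat (2 * \<lfloor>2*N\<rfloor> + 1)" by simp
      finally have "real (card S) \<le> real (nat (2 * \<lfloor>2*N\<rfloor> + 1))" by linarith
      also have "\<dots> = 2 * of_int \<lfloor>2*N\<rfloor> + 1" using N by (simp add: of_nat_nat)
      also have "\<dots> \<le> 2 * (2 * N) + 1" by (simp add: of_int_floor_le)
      finally show ?thesis using N by linarith
    qed
    define A where "A n = (\<integral>\<^sup>+\<xi>. ennreal ((cmod (g \<xi> n))\<^sup>2) \<partial>lebesgue)" for n
    define Y where "Y = (\<integral>\<^sup>+n. A n \<partial>count_space UNIV)"
    define X where "X = (\<integral>\<^sup>+n. (A n)\<^sup>2 \<partial>count_space UNIV)"
    define V where "V = (\<integral>\<^sup>+z. indicator (UNIV \<times> {0..<1::real}) z * ennreal ((cmod (f z))\<^sup>2) \<partial>lebesgue)"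
    have fm[measurable]: "f \<in> borel_measurable lebesgue" and Vfin: "V < \<infinity>"
      using f unfolding in_L2_RT_def V_def by auto
    have gm[measurable]: "(\<lambda>\<xi>. g \<xi> n) \<in> borel_measurable lebesgue" for n
      using g unfolding is_L2_fourier_def by auto
    have Yfin: "Y < \<infinity>" using g unfolding is_L2_fourier_def Y_def A_def by auto
    have AY: "A n \<le> Y" for n using sum_le_count_space[of "{n}" A] by (simp add: Y_def)
    have Afin: "A n < \<infinity>" for n using AY[of n] Yfin by (rule le_less_trans)
    have Xfin: "X < \<infinity>"
    proof -
      have "X \<le> (\<integral>\<^sup>+n. Y * A n \<partial>count_space UNIV)"
        unfolding X_def by (intro nn_integral_mono) (simp add: power2_eq_square mult_right_mono AY)
      also have "\<dots> = Y * Y" by (simp add: nn_integral_cmult Y_def)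
      also have "\<dots> < \<infinity>" using Yfin by (simp add: ennreal_mult_less_top)
      finally show ?thesis .
    qed
    define a where "a n = enn2real (A n)" for n
    have a0: "a n \<ge> 0" for n by (simp add: a_def)
    have Aa: "A n = ennreal (a n)" for n using Afin[of n] by (simp add: a_def)
    define x where "x = enn2real X"
    define v where "v = enn2real V"
    have Xx: "X = ennreal x" using Xfin by (simp add: x_def)
    have Vv: "V = ennreal v" using Vfin by (simp add: v_def)
    have x0: "x \<ge> 0" and v0: "v \<ge> 0" by (simp_all add: x_def v_def)
    have "\<forall>n. \<exists>h'. h' \<in> borel_measurable borel \<and> (AE \<xi> in lborel. g \<xi> n = h' \<xi>)"
      using complex_borel_version[OF gm] by blast
    then obtain gb where gbm[measurable]: "\<And>n. gb n \<in> borel_measurable borel"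
      and gae: "\<And>n. AE \<xi> in lborel. g \<xi> n = gb n \<xi>" by metis
    define G where "G n \<xi> = complex_of_real (\<phi> (\<xi>/N) * \<phi> (of_int n / N)) * gb n \<xi>" for n \<xi>
    have Gm[measurable]: "G n \<in> borel_measurable borel" for n unfolding G_def by measurable
    have Gsupp: "G n \<xi> = 0" if "\<xi> \<notin> {-(2*N)..2*N}" for n \<xi>
    proof -
      have "\<bar>\<xi>/N\<bar> \<ge> 2" using that N by (auto simp: abs_if field_simps)
      then show ?thesis by (simp add: G_def z)
    qed
    have GL2: "(\<integral>\<^sup>+\<xi>. ennreal ((cmod (G n \<xi>))\<^sup>2) \<partial>lborel) \<le> ennreal (B^4 * a n)" for n
    proof -
      have "(\<integral>\<^sup>+\<xi>. ennreal ((cmod (G n \<xi>))\<^sup>2) \<partial>lborel) \<le> (\<integral>\<^sup>+\<xi>. ennreal (B^4) * ennreal ((cmod (gb n \<xi>))\<^sup>2) \<partial>lborel)"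
      proof (intro nn_integral_mono)
        fix \<xi>
        have "\<bar>\<phi> (\<xi>/N) * \<phi> (of_int n / N)\<bar> \<le> B * B"
          unfolding abs_mult by (intro mult_mono Bb) (use B1 in auto)
        then have "(\<phi> (\<xi>/N) * \<phi> (of_int n / N))\<^sup>2 \<le> (B * B)\<^sup>2"
          by (metis abs_ge_zero power2_abs power_mono)
        moreover have "(B * B)\<^sup>2 = B^4" by (simp add: power4_eq_xxxx power2_eq_square)
        ultimately have le: "(\<phi> (\<xi>/N) * \<phi> (of_int n / N))\<^sup>2 \<le> B^4" by simp
        have e: "(cmod (G n \<xi>))\<^sup>2 = (\<phi> (\<xi>/N) * \<phi> (of_int n / N))\<^sup>2 * (cmod (gb n \<xi>))\<^sup>2"
          by (simp add: G_def norm_mult power_mult_distrib)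
        have "(cmod (G n \<xi>))\<^sup>2 \<le> B^4 * (cmod (gb n \<xi>))\<^sup>2"
          unfolding e by (rule mult_right_mono[OF le]) simp
        then show "ennreal ((cmod (G n \<xi>))\<^sup>2) \<le> ennreal (B^4) * ennreal ((cmod (gb n \<xi>))\<^sup>2)"
          by (simp add: ennreal_mult[symmetric] ennreal_leI)
      qed
      also have "\<dots> = ennreal (B^4) * (\<integral>\<^sup>+\<xi>. ennreal ((cmod (gb n \<xi>))\<^sup>2) \<partial>lborel)"
        by (rule nn_integral_cmult) measurable
      also have "(\<integral>\<^sup>+\<xi>. ennreal ((cmod (gb n \<xi>))\<^sup>2) \<partial>lborel) = A n"
      proof -
        have "(\<integral>\<^sup>+\<xi>. ennreal ((cmod (gb n \<xi>))\<^sup>2) \<partial>lborel) = (\<integral>\<^sup>+\<xi>. ennreal ((cmod (g \<xi> n))\<^sup>2) \<partial>lborel)"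
          by (rule nn_integral_cong_AE) (use gae[of n] in \<open>eventually_elim, simp\<close>)
        also have "\<dots> = A n" by (simp add: A_def nn_integral_completion)
        finally show ?thesis .
      qed
      finally show ?thesis using B1 by (simp add: Aa ennreal_mult[symmetric] a0)
    qed
    define h where "h n y = (LINT \<xi>|lborel. ce (\<xi> * y) * G n \<xi>)" for n y
    have N2: "2 * N > 0" using N by simp
    have hm[measurable]: "h n \<in> borel_measurable borel" for n
      using per_n(1)[OF N2 Gm Gsupp GL2] by (simp add: h_def[abs_def] a0)
    have hL2: "(\<integral>\<^sup>+y. ennreal ((cmod (h n y))\<^sup>2) \<partial>lborel) \<le> ennreal (B^4 * a n)" for n
      using per_n(2)[OF N2 Gm Gsupp GL2] by (simp add: h_def a0)
    have hL4: "(\<integral>\<^sup>+y. ennreal ((cmod (h n y))^4) \<partial>lborel) \<le> ennreal (2 * (2 * N) * (B^4 * a n)\<^sup>2)" for n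
      using per_n(3)[OF N2 Gm Gsupp GL2] by (simp add: h_def a0)
    have schrod: "schrod_PN \<phi> N g = (\<lambda>t x y. \<Sum>n\<in>S. ce (of_int n * y) * h n (x - 2 * pi * t * of_int n))"
      by (intro ext) (simp add: schrod_rewrite[OF \<phi>m gm gbm gae] S_def h_def G_def)
    define W where "W = 2 * (1 + ln (4 * N))"
    have W0: "W \<ge> 0" using N by (simp add: W_def)
    have Wb: "(\<Sum>p\<in>{p\<in>S\<times>S. fst p + snd p = m \<and> fst p \<noteq> snd p}. 1 / real_of_int \<bar>fst p - snd p\<bar>) \<le> W" for m
      unfolding W_def S_def by (rule W_bound[OF N])
    have "L4_pow4_TRT (schrod_PN \<phi> N g) = (\<integral>\<^sup>+t. indicator {0..1} t * (\<integral>\<^sup>+x. (\<integral>\<^sup>+y. indicator {0..<1} y *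
            ennreal ((cmod (\<Sum>n\<in>S. ce (of_int n * y) * h n (x - 2 * pi * t * of_int n)))^4) \<partial>lborel) \<partial>lborel) \<partial>lborel)"
      unfolding schrod by (rule L4_decomp) measurable
    also have "\<dots> \<le> ennreal (2 * (\<Sum>n\<in>S. 2 * (2 * N) * (B^4 * a n)\<^sup>2) + (2 * W / (2 * pi)) * (\<Sum>p\<in>{p\<in>S\<times>S. fst p \<noteq> snd p}. (B^4 * a (fst p)) * (B^4 * a (snd p))))"
      by (rule assemble[OF Sfin _ W0 hm hL2 hL4 _ _ Wb]) (use N B1 in \<open>auto simp: a0\<close>)
    also have "\<dots> \<le> ennreal (K1 * ln N * v\<^sup>2 + K2 * N * x)"
    proof (rule ennreal_leI)
      show "2 * (\<Sum>n\<in>S. 2 * (2 * N) * (B^4 * a n)\<^sup>2) + (2 * W / (2 * pi)) * (\<Sum>p\<in>{p\<in>S\<times>S. fst p \<noteq> snd p}. (B^4 * a (fst p)) * (B^4 * a (snd p)))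
          \<le> K1 * ln N * v\<^sup>2 + K2 * N * x"
      proof -
        define Pr where "Pr = {p\<in>S\<times>S. fst p \<noteq> snd p}"
        define s1 where "s1 = (\<Sum>n\<in>S. (a n)\<^sup>2)"
        define s2 where "s2 = (\<Sum>p\<in>Pr. a (fst p) * a (snd p))"
        define sa where "sa = (\<Sum>n\<in>S. a n)"
        have sa0: "sa \<ge> 0" unfolding sa_def by (intro sum_nonneg a0)
        have s20: "s2 \<ge> 0" unfolding s2_def by (intro sum_nonneg) (simp add: a0)
        have F1: "s1 \<le> x"
        proof -
          have "(\<Sum>n\<in>S. (A n)\<^sup>2) \<le> X" unfolding X_def by (rule sum_le_count_space[OF Sfin])
          moreover have "(\<Sum>n\<in>S. (A n)\<^sup>2) = ennreal s1"
            unfolding s1_def Aa by (simp add: ennreal_power a0 sum_ennreal)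
          ultimately show ?thesis using x0 by (simp add: Xx)
        qed
        have F2: "sa \<le> 2 * v"
        proof -
          have "(\<Sum>n\<in>S. A n) \<le> 2 * V" unfolding A_def V_def by (rule g_bound[OF f g Sfin])
          moreover have "(\<Sum>n\<in>S. A n) = ennreal sa" unfolding sa_def Aa by (simp add: sum_ennreal a0)
          moreover have "2 * V = ennreal (2 * v)" using v0 by (simp add: Vv ennreal_mult)
          ultimately show ?thesis using v0 by simp
        qed
        have F3: "s2 \<le> sa\<^sup>2"
        proof -
          have "s2 \<le> (\<Sum>p\<in>S\<times>S. a (fst p) * a (snd p))"
            unfolding s2_def Pr_def by (rule sum_mono2) (use Sfin a0 in auto)
          also have "\<dots> = sa\<^sup>2"
            by (simp add: sa_def power2_eq_square sum_product sum.cartesian_product split_def)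
          finally show ?thesis .
        qed
        have F4: "sa\<^sup>2 \<le> 5 * N * x"
        proof -
          have "sa\<^sup>2 = (\<Sum>n\<in>S. 1 * a n)\<^sup>2" by (simp add: sa_def)
          also have "\<dots> \<le> (\<Sum>n\<in>S. 1\<^sup>2) * (\<Sum>n\<in>S. (a n)\<^sup>2)" by (rule Cauchy_Schwarz_ineq_sum)
          also have "\<dots> = real (card S) * s1" by (simp add: s1_def)
          also have "\<dots> \<le> (5 * N) * x"
            by (intro mult_mono cardS F1) (use N in \<open>auto simp: s1_def intro: sum_nonneg\<close>)
          finally show ?thesis by simp
        qed
        have F5: "sa\<^sup>2 \<le> 4 * v\<^sup>2"
        proof -
          have "sa\<^sup>2 \<le> (2 * v)\<^sup>2" using F2 sa0 by (intro power_mono) auto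
          then show ?thesis by (simp add: power_mult_distrib)
        qed
        define c1 where "c1 = 2 * (1 + ln 4) / pi * B^8"
        define c2 where "c2 = 2 * ln N / pi * B^8"
        have c10: "c1 \<ge> 0" unfolding c1_def by simp
        have c20: "c2 \<ge> 0" unfolding c2_def using N by simp
        have e1: "2 * (\<Sum>n\<in>S. 2 * (2 * N) * (B^4 * a n)\<^sup>2) + (2 * W / (2 * pi)) * (\<Sum>p\<in>{p\<in>S\<times>S. fst p \<noteq> snd p}. (B^4 * a (fst p)) * (B^4 * a (snd p)))
            = 8 * N * B^8 * s1 + c1 * s2 + c2 * s2"
        proof -
          have "(\<Sum>n\<in>S. 2 * (2 * N) * (B^4 * a n)\<^sup>2) = 4 * N * B^8 * s1"
            by (simp add: s1_def sum_distrib_left power_mult_distrib algebra_simps power_mult[symmetric])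
          moreover have "(\<Sum>p\<in>{p\<in>S\<times>S. fst p \<noteq> snd p}. (B^4 * a (fst p)) * (B^4 * a (snd p))) = B^8 * s2"
            by (simp add: s2_def Pr_def sum_distrib_left algebra_simps power_add[symmetric])
          moreover have "W = 2 * (1 + ln 4) + 2 * ln N" using N by (simp add: W_def ln_mult)
          ultimately show ?thesis by (simp add: c1_def c2_def field_simps)
        qed
        have i1: "8 * N * B^8 * s1 \<le> 8 * N * B^8 * x" using F1 N by (intro mult_left_mono) auto
        have i2: "c1 * s2 \<le> c1 * (5 * N * x)" using F3 F4 c10 by (intro mult_left_mono) auto
        have i3: "c2 * s2 \<le> c2 * (4 * v\<^sup>2)" using F3 F5 c20 by (intro mult_left_mono) auto
        have e2: "K1 * ln N * v\<^sup>2 + K2 * N * x = 8 * N * B^8 * x + c1 * (5 * N * x) + c2 * (4 * v\<^sup>2)"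
          by (simp add: K1_def K2_def c1_def c2_def field_simps)
        show ?thesis unfolding e1 e2 using i1 i2 i3 by linarith
      qed
    qed
    also have "\<dots> \<le> ennreal (((K1 + K2) powr (1/4) * (ln N powr (1/4) * L2_norm_RT f + N powr (1/4) * l4L2_norm g)) ^ 4)"
    proof (rule ennreal_leI)
      define \<alpha> where "\<alpha> = ln N powr (1/4) * L2_norm_RT f"
      define \<beta> where "\<beta> = N powr (1/4) * l4L2_norm g"
      have l2: "L2_norm_RT f = sqrt v" by (simp add: L2_norm_RT_def v_def V_def)
      have l4: "l4L2_norm g = x powr (1/4)" by (simp add: l4L2_norm_def x_def X_def A_def)
      have lnN: "ln N \<ge> 0" using N by simp
      have \<alpha>0: "\<alpha> \<ge> 0" and \<beta>0: "\<beta> \<ge> 0" using v0 by (simp_all add: \<alpha>_def \<beta>_def l2 l4)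
      have \<alpha>4: "\<alpha>^4 = ln N * v\<^sup>2"
        unfolding \<alpha>_def l2 power_mult_distrib powr_quarter_pow4[OF lnN]
        using v0 by (simp add: power4_eq_xxxx power2_eq_square)
      have \<beta>4: "\<beta>^4 = N * x"
        unfolding \<beta>_def l4 power_mult_distrib using N x0 by (simp add: powr_quarter_pow4)
      have C4: "((K1 + K2) powr (1/4))^4 = K1 + K2" using K1 K2 by (simp add: powr_quarter_pow4)
      have "K1 * ln N * v\<^sup>2 + K2 * N * x \<le> (K1 + K2) * (\<alpha>^4 + \<beta>^4)"
        using K1 K2 lnN v0 x0 N unfolding \<alpha>4 \<beta>4
        by (simp add: algebra_simps add_mono mult_nonneg_nonneg)
      also have "\<dots> \<le> (K1 + K2) * (\<alpha> + \<beta>)^4"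
        using K1 K2 pow4_sum_ge[OF \<alpha>0 \<beta>0] by (intro mult_left_mono) auto
      also have "\<dots> = ((K1 + K2) powr (1/4) * (\<alpha> + \<beta>))^4" by (simp add: power_mult_distrib C4)
      finally show "K1 * ln N * v\<^sup>2 + K2 * N * x \<le> ((K1 + K2) powr (1/4) * (ln N powr (1/4) * L2_norm_RT f + N powr (1/4) * l4L2_norm g)) ^ 4"
        by (simp add: \<alpha>_def \<beta>_def)
    qed
    finally show "L4_pow4_TRT (schrod_PN \<phi> N g) \<le> ennreal (((K1 + K2) powr (1/4) * (ln N powr (1/4) * L2_norm_RT f + N powr (1/4) * l4L2_norm g)) ^ 4)" .
  qed
qed

end
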